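(* There is no duality gap between the primal problem $$\min_{R,\Sigma\in\mathbf Q_n}\ \mathrm{tr}(R)\quad\text{s.t.}\quad R\succeq0,\ \Sigma-R\succeq0,\ \chi(\Sigma-R)=0,\ \Sigma\succ0,\ 2\mathcal D_{KL}(\Sigma\|\hat\Sigma)\le\delta$$ and the dual problem $\max_{\mathcal C_0}J$: their optimal values coincide. Moreover, if $(\lambda^*,\Gamma^*,\Theta^* )$ is an optimal solution of the dual problem, then the $\Sigma$-component of every optimal solution of the primal problem equals $$\Sigma^*=\lambda^*\big(\lambda^*\hat\Sigma^{-1}-\Gamma^*+\chi(\Theta^* )\big)^{-1},$$ and every optimal $R^*$ satisfies, with $\Lambda^*:=I+\Gamma^*-\chi(\Theta^* )$, the conditions $\mathrm{tr}(\Lambda^*R^* )=0$, $\mathrm{tr}(\Gamma^*(\Sigma^*-R^* ))=0$, $\mathrm{tr}(\Theta^*\chi(\Sigma^*-R^* ))=0$; in particular $R^*=\tilde UQ\tilde U^\top$ for some $Q\in\mathbf Q_r$, where $\tilde U$ is any matrix whose $r$ columns form an orthonormal basis of $\ker\Lambda^*$, and $\chi(\tilde UQ\tilde U^\top)=\chi(\Sigma^* )$.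
   Context: Notation: $\mathbf Q_n$ real symmetric $n\times n$ matrices; $\chi:\mathbf Q_n\to\mathbf Q_n$ the orthogonal projection (w.r.t. $\langle A,B\rangle=\mathrm{tr}(AB)$) onto the zero-diagonal symmetric matrices (keeps off-diagonal entries, zeroes the diagonal); $|\cdot|$ the determinant. $\hat\Sigma\in\mathbf Q_n$, $\hat\Sigma\succ0$; $\mathcal D_{KL}(\Sigma\|\hat\Sigma):=\frac12(-\log|\Sigma|+\log|\hat\Sigma|+\mathrm{tr}(\Sigma\hat\Sigma^{-1})-n)$; $\delta_{max}:=\log|[\hat\Sigma^{-1}-\chi(\hat\Sigma^{-1})]\hat\Sigma|$, and $0<\delta<\delta_{max}$. Define $$J(\lambda,\Gamma,\Theta):=\lambda\Big(\log\big|\hat\Sigma^{-1}+\lambda^{-1}(\chi(\Theta)-\Gamma)\big|+\log|\hat\Sigma|-\delta\Big),$$ $$\mathcal C_0:=\{(\lambda,\Gamma,\Theta)\in\mathbb R\times\mathbf Q_n\times\mathbf Q_n:\ \lambda>0,\ I+\Gamma-\chi(\Theta)\succeq0,\ \Gamma\succeq0,\ \hat\Sigma^{-1}+\lambda^{-1}(\chi(\Theta)-\Gamma)\succ0\}.$$ *)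

theory Defs
  imports "HOL-Analysis.Analysis"
begin

text \<open>Real n x n matrices are \<open>real^'n^'n\<close>; the dimension n is CARD('n).\<close>

definition symm :: "real^'n^'n \<Rightarrow> bool" where
  "symm A \<longleftrightarrow> transpose A = A"

definition psd :: "real^'n^'n \<Rightarrow> bool" where
  "psd A \<longleftrightarrow> symm A \<and> (\<forall>x. 0 \<le> x \<bullet> (A *v x))"

definition pd :: "real^'n^'n \<Rightarrow> bool" where
  "pd A \<longleftrightarrow> symm A \<and> (\<forall>x. x \<noteq> 0 \<longrightarrow> 0 < x \<bullet> (A *v x))"

text \<open>The projection chi: keep off-diagonal entries, zero the diagonal.\<close>
definition offdiag :: "real^'n^'n \<Rightarrow> real^'n^'n" where
  "offdiag A = (\<chi> i j. if i = j then 0 else A $ i $ j)"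

definition KL :: "real^'n^'n \<Rightarrow> real^'n^'n \<Rightarrow> real" where
  "KL S Sh = (1/2) * (- ln (det S) + ln (det Sh) + trace (S ** matrix_inv Sh) - real CARD('n))"

definition delta_max :: "real^'n^'n \<Rightarrow> real" where
  "delta_max Sh = ln (det ((matrix_inv Sh - offdiag (matrix_inv Sh)) ** Sh))"

definition Jdual :: "real^'n^'n \<Rightarrow> real \<Rightarrow> real \<Rightarrow> real^'n^'n \<Rightarrow> real^'n^'n \<Rightarrow> real" where
  "Jdual Sh \<delta> lam G T =
     lam * (ln (det (matrix_inv Sh + (1/lam) *\<^sub>R (offdiag T - G))) + ln (det Sh) - \<delta>)"

definition C0 :: "real^'n^'n \<Rightarrow> (real \<times> (real^'n^'n) \<times> (real^'n^'n)) set" where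
  "C0 Sh = {(lam, G, T). symm G \<and> symm T \<and> lam > 0 \<and> psd (mat 1 + G - offdiag T) \<and> psd G
              \<and> pd (matrix_inv Sh + (1/lam) *\<^sub>R (offdiag T - G))}"

definition primal_feasible :: "real^'n^'n \<Rightarrow> real \<Rightarrow> ((real^'n^'n) \<times> (real^'n^'n)) set" where
  "primal_feasible Sh \<delta> = {(R, S). symm R \<and> symm S \<and> psd R \<and> psd (S - R)
              \<and> offdiag (S - R) = 0 \<and> pd S \<and> 2 * KL S Sh \<le> \<delta>}"

definition primal_value :: "real^'n^'n \<Rightarrow> real \<Rightarrow> real" where
  "primal_value Sh \<delta> = Inf ((\<lambda>(R, S). trace R) ` primal_feasible Sh \<delta>)"

definition dual_value :: "real^'n^'n \<Rightarrow> real \<Rightarrow> real" where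
  "dual_value Sh \<delta> = Sup ((\<lambda>(lam, G, T). Jdual Sh \<delta> lam G T) ` C0 Sh)"

end

theory Submission
  imports Defs
begin

lemma quad_zero:
  fixes c d :: real
  assumes "\<And>t. 0 \<le> t * c + t^2 * d"
  shows "c = 0"
proof (rule ccontr)
  assume c: "c \<noteq> 0"
  show False
  proof (cases "d \<le> 0")
    case True
    have "0 \<le> (-c) * c + (-c)^2 * d" by (rule assms)
    moreover have "(-c)^2 * d \<le> 0" using True by (simp add: mult_nonneg_nonpos)
    moreover have "c*c > 0" using c by (metis not_real_square_gt_zero)
    hence "(-c)*c < 0" by simp
    ultimately show False by linarith
  next
    case False
    have "0 \<le> (-c/(2*d)) * c + (-c/(2*d))^2 * d" by (rule assms)
    also have "\<dots> = -((c^2)/(4*d))" using False by (simp add: field_simps power2_eq_square)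
    finally have "c^2/(4*d) \<le> 0" by simp
    moreover have "c^2/(4*d) > 0" using c False by simp
    ultimately show False by linarith
  qed
qed

lemma symm_dot: 
  fixes A :: "real^'n^'n"
  assumes "transpose A = A"
  shows "x \<bullet> (A *v y) = (A *v x) \<bullet> y"
proof -
  have "x \<bullet> (A *v y) = (x v* A) \<bullet> y" by (simp add: dot_lmul_matrix)
  also have "x v* A = transpose A *v x" by simp
  finally show ?thesis using assms by simp
qed

lemma eigvec_exists:
  fixes A :: "real^'n^'n"
  assumes symm: "transpose A = A" and fin: "finite E"
    and eig: "\<And>e. e \<in> E \<Longrightarrow> A *v e = (e \<bullet> (A *v e)) *\<^sub>R e"
    and card: "card E < CARD('n)"
  shows "\<exists>x. norm x = 1 \<and> (\<forall>e\<in>E. e \<bullet> x = 0) \<and> A *v x = (x \<bullet> (A *v x)) *\<^sub>R x"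
proof -
  define V where "V = {x::real^'n. \<forall>e\<in>E. e \<bullet> x = 0}"
  have "dim E < DIM(real^'n)"
    using dim_le_card'[OF fin] card by simp
  then obtain z where z: "z \<noteq> 0" "\<And>y. y \<in> span E \<Longrightarrow> orthogonal z y"
    using orthogonal_to_subspace_exists by blast
  have zV: "z \<in> V" using z(2)[OF span_base] unfolding V_def orthogonal_def
    by (simp add: inner_commute)
  have Vsub: "subspace V" unfolding V_def subspace_def by (auto simp: inner_add_right)
  define K where "K = V \<inter> sphere 0 1"
  have V_eq: "V = (\<Inter>e\<in>E. {x. e \<bullet> x = 0})" unfolding V_def by auto
  have "closed V" unfolding V_eq
    by (intro closed_INT ballI closed_hyperplane)
  hence "compact K" unfolding K_def by (simp add: closed_Int_compact)
  have "z /\<^sub>R norm z \<in> K" unfolding K_def using zV z(1) Vsub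
    by (simp add: subspace_scale)
  hence "K \<noteq> {}" by blast
  have "continuous_on K (\<lambda>x. x \<bullet> (A *v x))"
    by (intro continuous_intros linear_continuous_on matrix_vector_mul_linear) 
  then obtain x where xK: "x \<in> K" and xmax: "\<And>y. y \<in> K \<Longrightarrow> y \<bullet> (A *v y) \<le> x \<bullet> (A *v x)"
    using continuous_attains_sup[OF \<open>compact K\<close> \<open>K \<noteq> {}\<close>] by blast
  define m where "m = x \<bullet> (A *v x)"
  have xV: "x \<in> V" and nx: "norm x = 1" using xK unfolding K_def by auto
  have bound: "y \<bullet> (A *v y) \<le> m * (y \<bullet> y)" if "y \<in> V" for y
  proof (cases "y = 0")
    case True then show ?thesis by simp
  next
    case False
    let ?u = "y /\<^sub>R norm y"
    have "?u \<in> K" unfolding K_def using that False Vsub by (simp add: subspace_scale)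
    hence "?u \<bullet> (A *v ?u) \<le> m" using xmax m_def by blast
    moreover have "?u \<bullet> (A *v ?u) = (y \<bullet> (A *v y)) / (norm y)^2"
      by (simp add: matrix_vector_mult_scaleR power2_eq_square field_simps)
    moreover have "y \<bullet> y = (norm y)^2" by (simp add: power2_norm_eq_inner)
    ultimately show ?thesis using False by (simp add: divide_le_eq mult.commute)
  qed
  have orth: "y \<bullet> (m *\<^sub>R x - A *v x) = 0" if yV: "y \<in> V" for y
  proof -
    let ?c = "2 * (y \<bullet> (m *\<^sub>R x - A *v x))"
    let ?d = "m * (y \<bullet> y) - y \<bullet> (A *v y)"
    have "0 \<le> t * ?c + t^2 * ?d" for t
    proof -
      have "x + t *\<^sub>R y \<in> V" using xV yV Vsub by (simp add: subspace_add subspace_scale)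
      hence "(x + t *\<^sub>R y) \<bullet> (A *v (x + t *\<^sub>R y)) \<le> m * ((x + t *\<^sub>R y) \<bullet> (x + t *\<^sub>R y))"
        by (rule bound)
      moreover have "x \<bullet> x = 1" using nx by (simp add: norm_eq_1)
      moreover have "x \<bullet> (A *v y) = y \<bullet> (A *v x)" using symm_dot[OF symm] by (simp add: inner_commute)
      ultimately show ?thesis unfolding m_def
        by (simp add: matrix_vector_right_distrib matrix_vector_mult_scaleR inner_add_left inner_add_right
            inner_diff_right inner_commute algebra_simps power2_eq_square)
    qed
    then have "?c = 0" by (rule quad_zero)
    thus ?thesis by simp
  qed
  have wV: "m *\<^sub>R x - A *v x \<in> V"
    unfolding V_def mem_Collect_eq
  proof (intro ballI)
    fix e assume e: "e \<in> E"
    have ex: "e \<bullet> x = 0" using xV e unfolding V_def by blast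
    have "e \<bullet> (A *v x) = (A *v e) \<bullet> x" by (rule symm_dot[OF symm])
    also have "\<dots> = (e \<bullet> (A *v e)) * (e \<bullet> x)" by (subst eig[OF e]) simp
    finally show "e \<bullet> (m *\<^sub>R x - A *v x) = 0" using \<open>e \<bullet> x = 0\<close> by (simp add: inner_diff_right)
  qed
  have "m *\<^sub>R x - A *v x = 0" using orth[OF wV] by simp
  hence "A *v x = m *\<^sub>R x" by simp
  thus ?thesis using nx xV unfolding V_def m_def by blast
qed

lemma eig_sets:
  fixes A :: "real^'n^'n"
  assumes symm: "transpose A = A" and k: "k \<le> CARD('n)"
  shows "\<exists>E. finite E \<and> card E = k \<and> (\<forall>e\<in>E. norm e = 1 \<and> A *v e = (e \<bullet> (A *v e)) *\<^sub>R e)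
          \<and> (\<forall>e\<in>E. \<forall>f\<in>E. e \<noteq> f \<longrightarrow> e \<bullet> f = 0)"
  using k
proof (induction k)
  case 0
  show ?case by (intro exI[of _ "{}"]) simp
next
  case (Suc k)
  then obtain E where E: "finite E" "card E = k" "\<forall>e\<in>E. norm e = 1 \<and> A *v e = (e \<bullet> (A *v e)) *\<^sub>R e"
     "\<forall>e\<in>E. \<forall>f\<in>E. e \<noteq> f \<longrightarrow> e \<bullet> f = 0" by auto
  obtain x where x: "norm x = 1" "\<forall>e\<in>E. e \<bullet> x = 0" "A *v x = (x \<bullet> (A *v x)) *\<^sub>R x"
    using eigvec_exists[OF symm E(1)] E Suc.prems by auto
  have xE: "x \<notin> E" using x(1,2) by (metis inner_eq_zero_iff norm_zero zero_neq_one)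
  show ?case
    apply (intro exI[of _ "insert x E"])
    using E x xE by (auto simp: inner_commute)
qed

definition colm :: "('n \<Rightarrow> real^'m) \<Rightarrow> real^'n^'m" where
  "colm v = (\<chi> r c. v c $ r)"

definition diagm :: "('n \<Rightarrow> real) \<Rightarrow> real^'n^'n" where
  "diagm d = (\<chi> i j. if i = j then d i else 0)"

lemma colm_tT: "transpose (colm v) ** colm v = (\<chi> i j. v i \<bullet> v j)"
  by (simp add: colm_def transpose_def matrix_matrix_mult_def inner_vec_def vec_eq_iff)

lemma mult_colm: "A ** colm v = colm (\<lambda>c. A *v v c)"
  by (simp add: colm_def matrix_matrix_mult_def matrix_vector_mult_def vec_eq_iff)

lemma colm_diagm: "colm v ** diagm d = colm (\<lambda>c. d c *\<^sub>R v c)"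
  by (simp add: colm_def diagm_def matrix_matrix_mult_def vec_eq_iff if_distrib mult.commute cong: if_cong)

lemma spectral:
  fixes A :: "real^'n^'n"
  assumes symm: "transpose A = A"
  obtains Q :: "real^'n^'n" and d where "transpose Q ** Q = mat 1" "Q ** transpose Q = mat 1"
     "A = Q ** diagm d ** transpose Q"
proof -
  obtain E where E: "finite E" "card E = CARD('n)" "\<forall>e\<in>E. norm e = 1 \<and> A *v e = (e \<bullet> (A *v e)) *\<^sub>R e"
     "\<forall>e\<in>E. \<forall>f\<in>E. e \<noteq> f \<longrightarrow> e \<bullet> f = 0"
    using eig_sets[OF symm, of "CARD('n)"] by auto
  obtain h where h: "bij_betw h (UNIV::'n set) E"
    using finite_same_card_bij[of "UNIV::'n set" E] E(1,2) by auto
  define v where "v = h"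
  define d where "d = (\<lambda>i. v i \<bullet> (A *v v i))"
  define Q where "Q = colm v"
  have vE: "v i \<in> E" for i using h unfolding v_def bij_betw_def by auto
  have vinj: "v i = v j \<Longrightarrow> i = j" for i j using h unfolding v_def bij_betw_def inj_on_def by auto
  have orth: "v i \<bullet> v j = (if i = j then 1 else 0)" for i j
  proof (cases "i = j")
    case True then show ?thesis using E(3) vE[of i] by (simp add: norm_eq_1)
  next
    case False then show ?thesis using E(4) vE[of i] vE[of j] vinj by auto
  qed
  have QQ: "transpose Q ** Q = mat 1" unfolding Q_def colm_tT
    by (simp add: orth mat_def vec_eq_iff)
  hence QQ2: "Q ** transpose Q = mat 1" using matrix_left_right_inverse by blast
  have AQ: "A ** Q = Q ** diagm d" unfolding Q_def mult_colm colm_diagm d_def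
    using E(3) vE by metis
  have "A = A ** (Q ** transpose Q)" using QQ2 by simp
  also have "\<dots> = Q ** diagm d ** transpose Q" by (simp add: matrix_mul_assoc AQ)
  finally show ?thesis using that QQ QQ2 by blast
qed

lemma transpose_diagm[simp]: "transpose (diagm d) = diagm d"
  by (simp add: diagm_def transpose_def vec_eq_iff)

lemma diagm_mult: "diagm a ** diagm b = diagm (\<lambda>i. a i * b i)"
proof -
  have "(\<Sum>k\<in>UNIV. (if i = k then a i else 0) * (if k = j then b k else 0)) = (if i = j then a i * b i else 0)" for i j :: 'a
  proof -
    have "(\<Sum>k\<in>UNIV. (if i = k then a i else 0) * (if k = j then b k else 0)) = (\<Sum>k\<in>UNIV. if k = i then (if i = j then a i * b i else 0) else 0)"
      by (intro sum.cong) auto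
    also have "\<dots> = (if i = j then a i * b i else 0)" by simp
    finally show ?thesis .
  qed
  thus ?thesis unfolding diagm_def matrix_matrix_mult_def by (simp add: vec_eq_iff)
qed

lemma det_diagm: "det (diagm d) = prod d UNIV"
  by (subst det_diagonal) (auto simp: diagm_def)

lemma trace_diagm: "trace (diagm d) = sum d UNIV"
  by (simp add: trace_def diagm_def)

lemma transpose_add: "transpose (A + B) = transpose A + transpose (B::real^'n^'m)"
  by (simp add: transpose_def vec_eq_iff)
lemma transpose_diff: "transpose (A - B) = transpose A - transpose (B::real^'n^'m)"
  by (simp add: transpose_def vec_eq_iff)
lemma transpose_uminus: "transpose (- A) = - transpose (A::real^'n^'m)"
  by (simp add: transpose_def vec_eq_iff)

lemma inner_trace: "(Y::real^'n^'m) \<bullet> R = trace (transpose Y ** R)"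
  by (simp add: inner_vec_def trace_def matrix_matrix_mult_def transpose_def)
     (rule sum.swap)

lemma inner_trace_symm: "transpose Y = Y \<Longrightarrow> (Y::real^'n^'n) \<bullet> R = trace (Y ** R)"
  using inner_trace[of Y R] by simp

lemma dot_mv: "x \<bullet> ((A::real^'n^'m) *v y) = (transpose A *v x) \<bullet> y"
  by (metis dot_lmul_matrix transpose_matrix_vector)

lemma QDQ_quad:
  fixes Q :: "real^'n^'n"
  shows "x \<bullet> ((Q ** diagm d ** transpose Q) *v x) = (\<Sum>i\<in>UNIV. d i * ((transpose Q *v x)$i)^2)"
proof -
  let ?y = "transpose Q *v x"
  have "x \<bullet> ((Q ** diagm d ** transpose Q) *v x) = x \<bullet> (Q *v (diagm d *v ?y))"
    by (simp add: matrix_vector_mul_assoc matrix_mul_assoc del: transpose_matrix_vector)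
  also have "\<dots> = ?y \<bullet> (diagm d *v ?y)" by (simp add: dot_mv del: transpose_matrix_vector)
  also have "\<dots> = (\<Sum>i\<in>UNIV. d i * (?y$i)^2)"
    by (simp add: inner_vec_def diagm_def matrix_vector_mult_def if_distrib if_distribR power2_eq_square
        mult.commute mult.left_commute cong: if_cong del: transpose_matrix_vector)
  finally show ?thesis .
qed

lemma orth_norm:
  fixes Q :: "real^'n^'n"
  assumes "Q ** transpose Q = mat 1"
  shows "(transpose Q *v x) \<bullet> (transpose Q *v x) = x \<bullet> x"
  by (metis assms dot_mv matrix_vector_mul_assoc matrix_vector_mul_lid transpose_transpose)

lemma orth_axis:
  fixes Q :: "real^'n^'n"
  assumes "transpose Q ** Q = mat 1"
  shows "transpose Q *v (Q *v axis i 1) = axis i 1"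
  by (metis assms matrix_vector_mul_assoc matrix_vector_mul_lid)

lemma spectral_psd:
  fixes Q :: "real^'n^'n"
  assumes "transpose Q ** Q = mat 1" "\<forall>x. 0 \<le> x \<bullet> ((Q ** diagm d ** transpose Q) *v x)"
  shows "0 \<le> d i"
proof -
  have "0 \<le> (\<Sum>j\<in>UNIV. d j * ((axis i 1 :: real^'n)$j)^2)"
    using assms(2)[rule_format, of "Q *v axis i 1"] unfolding QDQ_quad orth_axis[OF assms(1)] .
  also have "\<dots> = (\<Sum>j\<in>UNIV. if j = i then d i else 0)"
    by (intro sum.cong) (auto simp: axis_def)
  also have "\<dots> = d i" by simp
  finally show ?thesis .
qed

lemma spectral_pd:
  fixes Q :: "real^'n^'n"
  assumes "transpose Q ** Q = mat 1" "\<forall>x. x \<noteq> 0 \<longrightarrow> 0 < x \<bullet> ((Q ** diagm d ** transpose Q) *v x)"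
  shows "0 < d i"
proof -
  have "Q *v axis i 1 \<noteq> 0" using orth_axis[OF assms(1), of i]
    by (metis axis_nth matrix_vector_mult_0_right vec_lambda_beta zero_index zero_neq_one)
  then have "0 < (\<Sum>j\<in>UNIV. d j * ((axis i 1 :: real^'n)$j)^2)"
    using assms(2)[rule_format, of "Q *v axis i 1"] unfolding QDQ_quad orth_axis[OF assms(1)] by blast
  also have "\<dots> = (\<Sum>j\<in>UNIV. if j = i then d i else 0)"
    by (intro sum.cong) (auto simp: axis_def)
  also have "\<dots> = d i" by simp
  finally show ?thesis .
qed

lemma det_QDQ:
  fixes Q :: "real^'n^'n"
  assumes "transpose Q ** Q = mat 1"
  shows "det (Q ** diagm d ** transpose Q) = prod d UNIV"
proof -
  have "det (transpose Q) * det Q = 1"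
    using det_mul[of "transpose Q" Q] assms by simp
  thus ?thesis unfolding det_mul det_diagm by simp
qed

lemma trace_QDQ:
  fixes Q :: "real^'n^'n"
  assumes "transpose Q ** Q = mat 1"
  shows "trace (Q ** diagm d ** transpose Q) = sum d UNIV"
proof -
  have "trace (Q ** diagm d ** transpose Q) = trace (transpose Q ** (Q ** diagm d))"
    by (rule trace_mul_sym)
  also have "\<dots> = trace ((transpose Q ** Q) ** diagm d)" by (simp only: matrix_mul_assoc)
  also have "\<dots> = trace (diagm d)" by (simp only: assms matrix_mul_lid)
  finally show ?thesis by (simp add: trace_diagm)
qed

lemma symm_QDQ:
  fixes Q :: "real^'n^'n"
  shows "transpose (Q ** diagm d ** transpose Q) = Q ** diagm d ** transpose Q"
  by (simp only: matrix_transpose_mul transpose_transpose transpose_diagm matrix_mul_assoc)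

lemma spectral_ex:
  fixes A :: "real^'n^'n"
  assumes "transpose A = A"
  shows "\<exists>(Q::real^'n^'n) d. transpose Q ** Q = mat 1 \<and> Q ** transpose Q = mat 1 \<and> A = Q ** diagm d ** transpose Q"
  by (rule spectral[OF assms]) (rule exI, rule exI, intro conjI, assumption+)

lemma pd_det_pos:
  fixes A :: "real^'n^'n"
  assumes "pd A" shows "0 < det A"
proof -
  have sA: "transpose A = A" using assms by (simp add: pd_def symm_def)
  obtain Q :: "real^'n^'n" and d where Q: "transpose Q ** Q = mat 1" "Q ** transpose Q = mat 1" "A = Q ** diagm d ** transpose Q"
    using spectral_ex[OF sA] by blast
  have h: "\<forall>x. x \<noteq> 0 \<longrightarrow> 0 < x \<bullet> (A *v x)" using assms by (simp add: pd_def)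
  have h2: "\<forall>x. x \<noteq> 0 \<longrightarrow> 0 < x \<bullet> ((Q ** diagm d ** transpose Q) *v x)"
    using h by (simp only: Q(3)[symmetric])
  have pos: "0 < d i" for i using spectral_pd[OF Q(1) h2] .
  have "det A = prod d UNIV" by (simp only: Q(3) det_QDQ[OF Q(1)])
  thus ?thesis using pos by (simp add: prod_pos)
qed

lemma pd_invertible: "pd (A::real^'n^'n) \<Longrightarrow> invertible A"
  using pd_det_pos invertible_det_nz by force

lemma inv_props:
  fixes A :: "real^'n^'n"
  assumes "invertible A"
  shows "A ** matrix_inv A = mat 1" "matrix_inv A ** A = mat 1"
  using someI_ex[of "\<lambda>A'. A ** A' = mat 1 \<and> A' ** A = mat 1"] assms
  unfolding invertible_def matrix_inv_def by auto

lemma inv_unique: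
  fixes A X :: "real^'n^'n"
  assumes "A ** X = mat 1"
  shows "matrix_inv A = X"
proof -
  have "X ** A = mat 1" using assms matrix_left_right_inverse by blast
  hence inv: "invertible A" using assms unfolding invertible_def by blast
  have "matrix_inv A = matrix_inv A ** (A ** X)" using assms by simp
  also have "\<dots> = X" by (simp add: matrix_mul_assoc inv_props[OF inv])
  finally show ?thesis .
qed

lemma pd_inv:
  fixes A :: "real^'n^'n"
  assumes "pd A"
  shows "pd (matrix_inv A)" "symm (matrix_inv A)"
proof -
  have inv: "invertible A" by (rule pd_invertible[OF assms])
  have sA: "transpose A = A" using assms unfolding pd_def symm_def by simp
  have "A ** transpose (matrix_inv A) = mat 1"
    by (metis sA inv_props(2)[OF inv] matrix_transpose_mul transpose_mat)
  hence "matrix_inv A = transpose (matrix_inv A)" using inv_unique by metis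
  thus s: "symm (matrix_inv A)" unfolding symm_def by simp
  show "pd (matrix_inv A)" unfolding pd_def
  proof (intro conjI s allI impI)
    fix x :: "real^'n" assume x: "x \<noteq> 0"
    let ?y = "matrix_inv A *v x"
    have yx: "A *v ?y = x" by (simp add: matrix_vector_mul_assoc inv_props[OF inv])
    hence "?y \<noteq> 0" using x by auto
    hence "0 < ?y \<bullet> (A *v ?y)" using assms unfolding pd_def by blast
    also have "?y \<bullet> (A *v ?y) = x \<bullet> ?y" by (simp add: yx inner_commute)
    finally show "0 < x \<bullet> (matrix_inv A *v x)" .
  qed
qed

lemma psd_zero_quad:
  fixes A :: "real^'n^'n"
  assumes "psd A" "x \<bullet> (A *v x) = 0"
  shows "A *v x = 0"
proof -
  have sA: "transpose A = A" using assms unfolding psd_def symm_def by simp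
  have "y \<bullet> (A *v x) = 0" for y
  proof -
    have "0 \<le> t * (2 * (y \<bullet> (A *v x))) + t^2 * (y \<bullet> (A *v y))" for t
    proof -
      have "0 \<le> (x + t *\<^sub>R y) \<bullet> (A *v (x + t *\<^sub>R y))" using assms unfolding psd_def by blast
      moreover have "x \<bullet> (A *v y) = y \<bullet> (A *v x)" using symm_dot[OF sA] by (simp add: inner_commute)
      ultimately show ?thesis using assms(2)
        by (simp add: matrix_vector_right_distrib matrix_vector_mult_scaleR inner_add_left inner_add_right
            algebra_simps power2_eq_square)
    qed
    from quad_zero[OF this] show ?thesis by simp
  qed
  from this[of "A *v x"] show ?thesis by simp
qed

lemma mv_axis: "((A::real^'n^'m) *v axis j 1) $ i = A$i$j"
  by (simp add: matrix_vector_mult_basis column_def)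

lemma diag_right_nth: "((M::real^'n^'m) ** diagm d) $ i $ j = M$i$j * d j"
proof -
  have "(\<Sum>k\<in>UNIV. M$i$k * (if k = j then d k else 0)) = (\<Sum>k\<in>UNIV. if k = j then M$i$j * d j else 0)"
    by (intro sum.cong) auto
  thus ?thesis by (simp add: matrix_matrix_mult_def diagm_def)
qed

lemma diag_left_nth: "(diagm d ** (M::real^'m^'n)) $ i $ j = d i * M$i$j"
proof -
  have "(\<Sum>k\<in>UNIV. (if i = k then d i else 0) * M$k$j) = (\<Sum>k\<in>UNIV. if k = i then d i * M$i$j else 0)"
    by (intro sum.cong) auto
  thus ?thesis by (simp add: matrix_matrix_mult_def diagm_def)
qed

lemma trace_diag_right: "trace ((C::real^'n^'n) ** diagm d) = (\<Sum>i\<in>UNIV. C$i$i * d i)"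
  by (simp add: trace_def diag_right_nth)

lemma QAQ_nth:
  fixes Q A :: "real^'n^'n"
  shows "(transpose Q ** A ** Q)$i$j = (Q *v axis i 1) \<bullet> (A *v (Q *v axis j 1))"
proof -
  have "(transpose Q ** A ** Q)$i$j = ((transpose Q ** A ** Q) *v axis j 1) $ i" by (simp only: mv_axis)
  also have "\<dots> = axis i 1 \<bullet> (transpose Q *v (A *v (Q *v axis j 1)))"
    by (simp add: matrix_vector_mul_assoc matrix_mul_assoc inner_axis' del: transpose_matrix_vector)
  also have "\<dots> = (Q *v axis i 1) \<bullet> (A *v (Q *v axis j 1))"
    by (simp only: dot_mv transpose_transpose)
  finally show ?thesis .
qed

lemma trace_psd:
  fixes A B :: "real^'n^'n"
  assumes A: "psd A" and B: "psd B"
  shows "0 \<le> trace (A ** B)" "trace (A ** B) = 0 \<Longrightarrow> A ** B = 0"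
proof -
  have sB: "transpose B = B" using B by (simp add: psd_def symm_def)
  obtain Q :: "real^'n^'n" and d where Q: "transpose Q ** Q = mat 1" "Q ** transpose Q = mat 1" "B = Q ** diagm d ** transpose Q"
    using spectral_ex[OF sB] by blast
  have h1: "\<forall>x. 0 \<le> x \<bullet> (B *v x)" using B by (simp add: psd_def)
  have h2: "\<forall>x. 0 \<le> x \<bullet> ((Q ** diagm d ** transpose Q) *v x)"
    unfolding Q(3)[symmetric] by (rule h1)
  have dpos: "0 \<le> d i" for i using spectral_psd[OF Q(1) h2] .
  define q where "q i = Q *v axis i 1" for i
  have qpos: "0 \<le> q i \<bullet> (A *v q i)" for i using A by (simp add: psd_def)
  have "trace (A ** B) = trace ((A ** Q ** diagm d) ** transpose Q)"
    by (simp only: Q(3) matrix_mul_assoc)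
  also have "\<dots> = trace (transpose Q ** (A ** Q ** diagm d))" by (rule trace_mul_sym)
  also have "\<dots> = trace ((transpose Q ** A ** Q) ** diagm d)" by (simp only: matrix_mul_assoc)
  also have "\<dots> = (\<Sum>i\<in>UNIV. (q i \<bullet> (A *v q i)) * d i)"
    by (simp only: trace_diag_right QAQ_nth q_def)
  finally have tr: "trace (A ** B) = (\<Sum>i\<in>UNIV. (q i \<bullet> (A *v q i)) * d i)" .
  have terms: "0 \<le> (q i \<bullet> (A *v q i)) * d i" for i using qpos dpos by simp
  show "0 \<le> trace (A ** B)" unfolding tr by (rule sum_nonneg) (use terms in auto)
  assume z: "trace (A ** B) = 0"
  have each: "(q i \<bullet> (A *v q i)) * d i = 0" for i
    using z terms unfolding tr by (simp add: sum_nonneg_eq_0_iff)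
  have zero: "d i = 0 \<or> A *v q i = 0" for i 
  proof (cases "d i = 0")
    case True then show ?thesis by simp
  next
    case False
    then have "q i \<bullet> (A *v q i) = 0" using each[of i] by simp
    then have "A *v q i = 0" using psd_zero_quad[OF A] by blast
    then show ?thesis by simp
  qed
  have AQD: "A ** Q ** diagm d = 0"
  proof -
    have "(A ** Q ** diagm d)$r$i = 0" for r i
    proof -
      have "(A ** Q ** diagm d)$r$i = (A ** Q)$r$i * d i" by (rule diag_right_nth)
      also have "(A ** Q)$r$i = (A *v q i)$r" unfolding q_def
        by (simp only: matrix_vector_mul_assoc mv_axis)
      finally show ?thesis using zero[of i] by auto
    qed
    thus ?thesis by (simp add: vec_eq_iff)
  qed
  have "A ** B = (A ** Q ** diagm d) ** transpose Q" by (simp only: Q(3) matrix_mul_assoc)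
  thus "A ** B = 0" by (simp add: AQD)
qed

lemma pd_spectral:
  fixes A :: "real^'n^'n"
  assumes "pd A"
  obtains Q :: "real^'n^'n" and d where "transpose Q ** Q = mat 1" "Q ** transpose Q = mat 1"
     "A = Q ** diagm d ** transpose Q" "\<And>i. 0 < d i"
proof -
  have sA: "transpose A = A" using assms by (simp add: pd_def symm_def)
  obtain Q :: "real^'n^'n" and d where Q: "transpose Q ** Q = mat 1" "Q ** transpose Q = mat 1" "A = Q ** diagm d ** transpose Q"
    using spectral_ex[OF sA] by blast
  have h1: "\<forall>x. x \<noteq> 0 \<longrightarrow> 0 < x \<bullet> (A *v x)" using assms by (simp add: pd_def)
  have h2: "\<forall>x. x \<noteq> 0 \<longrightarrow> 0 < x \<bullet> ((Q ** diagm d ** transpose Q) *v x)"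
    unfolding Q(3)[symmetric] by (rule h1)
  show ?thesis using that Q spectral_pd[OF Q(1) h2] by blast
qed

lemma QDQ_mult:
  fixes Q :: "real^'n^'n"
  assumes "transpose Q ** Q = mat 1"
  shows "(Q ** diagm a ** transpose Q) ** (Q ** diagm b ** transpose Q) = Q ** diagm (\<lambda>i. a i * b i) ** transpose Q"
proof -
  have "(Q ** diagm a ** transpose Q) ** (Q ** diagm b ** transpose Q) = Q ** diagm a ** (transpose Q ** Q) ** diagm b ** transpose Q"
    by (simp only: matrix_mul_assoc)
  also have "\<dots> = Q ** (diagm a ** diagm b) ** transpose Q" by (simp only: assms matrix_mul_rid matrix_mul_assoc)
  finally show ?thesis by (simp only: diagm_mult)
qed

lemma pd_sqrt:
  fixes S :: "real^'n^'n"
  assumes "pd S"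
  obtains H where "transpose H = H" "H ** H = S" "invertible H"
proof -
  obtain Q :: "real^'n^'n" and d where Q: "transpose Q ** Q = mat 1" "Q ** transpose Q = mat 1"
     "S = Q ** diagm d ** transpose Q" "\<And>i. 0 < d i"
    using pd_spectral[OF assms] by blast
  define H where "H = Q ** diagm (\<lambda>i. sqrt (d i)) ** transpose Q"
  have "transpose H = H" unfolding H_def by (rule symm_QDQ)
  moreover have "H ** H = S" unfolding H_def Q(3) QDQ_mult[OF Q(1)]
    using Q(4) by (simp add: less_imp_le)
  moreover have "0 < prod (\<lambda>i. sqrt (d i)) UNIV" using Q(4) by (simp add: prod_pos)
  hence "det H \<noteq> 0" unfolding H_def det_QDQ[OF Q(1)] by (metis less_irrefl)
  hence "invertible H" by (simp add: invertible_det_nz)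
  ultimately show ?thesis using that by blast
qed

lemma trace_comm3: "trace ((A::real^'n^'n) ** B ** C) = trace (B ** C ** A)"
  by (metis matrix_mul_assoc trace_mul_sym)

lemma logdet_ineq:
  fixes M S :: "real^'n^'n"
  assumes M: "pd M" and S: "pd S"
  shows "ln (det (M ** S)) \<le> trace (M ** S) - real CARD('n)"
    "ln (det (M ** S)) = trace (M ** S) - real CARD('n) \<Longrightarrow> M ** S = mat 1"
proof -
  obtain H where H: "transpose H = H" "H ** H = S" "invertible H" using pd_sqrt[OF S] by blast
  have sM: "transpose M = M" using M by (simp add: pd_def symm_def)
  define K where "K = H ** M ** H"
  have sK: "transpose K = K" unfolding K_def
    by (simp only: matrix_transpose_mul H(1) sM matrix_mul_assoc)
  have pK: "pd K" unfolding pd_def symm_def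
  proof (intro conjI sK allI impI)
    fix x :: "real^'n" assume x: "x \<noteq> 0"
    have "H *v x \<noteq> 0"
    proof
      assume "H *v x = 0"
      hence "matrix_inv H *v (H *v x) = 0" by simp
      hence "x = 0" by (simp add: matrix_vector_mul_assoc inv_props(2)[OF H(3)])
      thus False using x by simp
    qed
    hence "0 < (H *v x) \<bullet> (M *v (H *v x))" using M by (simp add: pd_def)
    also have "(H *v x) \<bullet> (M *v (H *v x)) = x \<bullet> (H *v (M *v (H *v x)))"
      using dot_mv[of "M *v (H *v x)" H x] H(1) by (simp add: inner_commute del: transpose_matrix_vector)
    also have "\<dots> = x \<bullet> (K *v x)"
      unfolding K_def by (simp only: matrix_vector_mul_assoc matrix_mul_assoc)
    finally show "0 < x \<bullet> (K *v x)" .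
  qed
  have detK: "det K = det (M ** S)" unfolding K_def H(2)[symmetric]
    by (simp only: det_mul mult.commute mult.left_commute mult.assoc)
  have trK: "trace K = trace (M ** S)"
  proof -
    have "trace K = trace (M ** H ** H)" unfolding K_def by (rule trace_comm3)
    also have "\<dots> = trace (M ** (H ** H))" by (simp only: matrix_mul_assoc)
    finally show ?thesis by (simp only: H(2))
  qed
  obtain P :: "real^'n^'n" and k where P: "transpose P ** P = mat 1" "P ** transpose P = mat 1"
     "K = P ** diagm k ** transpose P" "\<And>i. 0 < k i"
    using pd_spectral[OF pK] by blast
  have dK: "det K = prod k UNIV" unfolding P(3) det_QDQ[OF P(1)] ..
  have tK: "trace K = sum k UNIV" unfolding P(3) trace_QDQ[OF P(1)] ..
  have lnK: "ln (det K) = (\<Sum>i\<in>UNIV. ln (k i))" unfolding dK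
    by (rule ln_prod) (simp, metis P(4) less_irrefl)
  have diff: "trace K - real CARD('n) - ln (det K) = (\<Sum>i\<in>UNIV. k i - 1 - ln (k i))"
    unfolding lnK tK by (simp add: sum_subtractf)
  have nonneg: "0 \<le> k i - 1 - ln (k i)" for i using ln_le_minus_one[OF P(4)[of i]] by simp
  have "0 \<le> trace K - real CARD('n) - ln (det K)" unfolding diff by (rule sum_nonneg) (use nonneg in auto)
  thus "ln (det (M ** S)) \<le> trace (M ** S) - real CARD('n)" using detK trK by simp
  assume eq: "ln (det (M ** S)) = trace (M ** S) - real CARD('n)"
  hence z: "(\<Sum>i\<in>UNIV. k i - 1 - ln (k i)) = 0" using diff detK trK by simp
  have iff: "(\<Sum>i\<in>UNIV. k i - 1 - ln (k i)) = 0 \<longleftrightarrow> (\<forall>i\<in>UNIV. k i - 1 - ln (k i) = 0)"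
    by (rule sum_nonneg_eq_0_iff) (simp, rule nonneg)
  have all: "\<forall>i\<in>UNIV. k i - 1 - ln (k i) = 0" using iff z by blast
  have k1: "k i = 1" for i
  proof -
    have "ln (k i) = k i - 1" using all by simp
    thus ?thesis by (rule ln_eq_minus_one[OF P(4)[of i]])
  qed
  have "diagm k = mat 1" by (simp add: diagm_def mat_def k1 vec_eq_iff)
  hence "K = mat 1" using P(3) P(2) by simp
  hence "H ** (M ** H) = mat 1" unfolding K_def by (simp add: matrix_mul_assoc)
  hence "(M ** H) ** H = mat 1" using matrix_left_right_inverse by blast
  thus "M ** S = mat 1" by (simp add: H(2)[symmetric] matrix_mul_assoc)
qed

lemma mv_scale: "(c *\<^sub>R (A::real^'n^'m)) *v x = c *\<^sub>R (A *v x)"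
  by (simp add: matrix_vector_mult_def vec_eq_iff sum_distrib_left mult.assoc)

lemma trace_scale: "trace (c *\<^sub>R (A::real^'n^'n)) = c * trace A"
  by (simp add: trace_def sum_distrib_left)

lemma pd_comb:
  fixes S1 S2 :: "real^'n^'n"
  assumes "pd S1" "pd S2" "0 \<le> t" "t \<le> 1"
  shows "pd (t *\<^sub>R S1 + (1 - t) *\<^sub>R S2)"
  unfolding pd_def symm_def
proof (intro conjI allI impI)
  show "transpose (t *\<^sub>R S1 + (1 - t) *\<^sub>R S2) = t *\<^sub>R S1 + (1 - t) *\<^sub>R S2"
    using assms by (simp add: pd_def symm_def transpose_add transpose_scalar)
  fix x :: "real^'n" assume x: "x \<noteq> 0"
  have a: "0 < x \<bullet> (S1 *v x)" "0 < x \<bullet> (S2 *v x)" using assms x by (auto simp: pd_def)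
  have "x \<bullet> ((t *\<^sub>R S1 + (1 - t) *\<^sub>R S2) *v x) = t * (x \<bullet> (S1 *v x)) + (1 - t) * (x \<bullet> (S2 *v x))"
    by (simp add: matrix_vector_mult_add_rdistrib mv_scale inner_add_right)
  also have "\<dots> > 0"
  proof (cases "t = 0")
    case True then show ?thesis using a by simp
  next
    case False
    hence "0 < t * (x \<bullet> (S1 *v x))" using a assms by simp
    moreover have "0 \<le> (1 - t) * (x \<bullet> (S2 *v x))" using a assms by simp
    ultimately show ?thesis by linarith
  qed
  finally show "0 < x \<bullet> ((t *\<^sub>R S1 + (1 - t) *\<^sub>R S2) *v x)" .
qed

lemma det_mult_inv:
  fixes S :: "real^'n^'n"
  assumes "pd S"
  shows "det (matrix_inv S) * det S = 1"
  using det_mul[of "matrix_inv S" S] inv_props(2)[OF pd_invertible[OF assms]] by simp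

lemma logdet_concave:
  fixes S1 S2 :: "real^'n^'n"
  assumes S1: "pd S1" and S2: "pd S2" and t: "0 \<le> t" "t \<le> 1"
  shows "t * ln (det S1) + (1 - t) * ln (det S2) \<le> ln (det (t *\<^sub>R S1 + (1 - t) *\<^sub>R S2))"
proof -
  define S where "S = t *\<^sub>R S1 + (1 - t) *\<^sub>R S2"
  have pS: "pd S" unfolding S_def by (rule pd_comb[OF S1 S2 t])
  define M where "M = matrix_inv S"
  have pM: "pd M" unfolding M_def by (rule pd_inv(1)[OF pS])
  have dM: "0 < det M" by (rule pd_det_pos[OF pM])
  have bound: "ln (det X) \<le> trace (M ** X) - real CARD('n) - ln (det M)" if X: "pd X" for X
  proof -
    have "ln (det (M ** X)) = ln (det M) + ln (det X)"
      using dM pd_det_pos[OF X] by (simp add: det_mul ln_mult)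
    thus ?thesis using logdet_ineq(1)[OF pM X] by simp
  qed
  have "t * ln (det S1) + (1 - t) * ln (det S2) \<le>
        t * (trace (M ** S1) - real CARD('n) - ln (det M)) + (1 - t) * (trace (M ** S2) - real CARD('n) - ln (det M))"
    using bound[OF S1] bound[OF S2] t by (intro add_mono mult_left_mono) auto
  also have "\<dots> = trace (M ** S) - real CARD('n) - ln (det M)"
  proof -
    have "trace (M ** S) = t * trace (M ** S1) + (1 - t) * trace (M ** S2)"
      by (simp only: S_def matrix_add_ldistrib matrix_scalar_ac scalar_matrix_assoc[symmetric] trace_add trace_scale)
    thus ?thesis by (simp add: algebra_simps)
  qed
  also have "trace (M ** S) = real CARD('n)" unfolding M_def
    by (simp add: inv_props(2)[OF pd_invertible[OF pS]] trace_I)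
  also have "ln (det M) = - ln (det S)"
  proof -
    have e: "det M * det S = 1" unfolding M_def by (rule det_mult_inv[OF pS])
    have "ln (det M * det S) = ln (det M) + ln (det S)" using dM pd_det_pos[OF pS] by (simp add: ln_mult)
    thus ?thesis using e by simp
  qed
  finally show ?thesis unfolding S_def by simp
qed

lemma det_scale: "det (c *\<^sub>R (A::real^'n^'n)) = c ^ CARD('n) * det A"
proof -
  have "c *\<^sub>R A = diagm (\<lambda>_. c) ** A" by (simp add: vec_eq_iff diag_left_nth)
  thus ?thesis by (simp add: det_mul det_diagm)
qed

lemma mm_add_r: "((A::real^'n^'m) + B) ** C = A ** C + B ** C"
  by (simp add: matrix_matrix_mult_def vec_eq_iff sum.distrib algebra_simps)
lemma mm_diff_r: "((A::real^'n^'m) - B) ** C = A ** C - B ** C"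
  by (simp add: matrix_matrix_mult_def vec_eq_iff sum_subtractf algebra_simps)
lemma mm_diff_l: "(A::real^'n^'m) ** (B - C) = A ** B - A ** C"
  by (simp add: matrix_matrix_mult_def vec_eq_iff sum_subtractf algebra_simps)

lemma offdiag_nth: "offdiag A $ i $ j = (if i = j then 0 else A $ i $ j)"
  by (simp add: offdiag_def)

lemma offdiag_zero_nth: "offdiag D = 0 \<Longrightarrow> i \<noteq> j \<Longrightarrow> D $ i $ j = 0"
  by (metis offdiag_nth zero_index)

lemma trace_offdiag_zero:
  fixes T D :: "real^'n^'n"
  assumes "offdiag D = 0"
  shows "trace (offdiag T ** D) = 0"
proof -
  have "offdiag T $ i $ k * D $ k $ i = 0" for i k
    using offdiag_zero_nth[OF assms, of k i] by (cases "i = k") (auto simp: offdiag_nth)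
  hence "(\<Sum>i\<in>UNIV. \<Sum>k\<in>UNIV. offdiag T $ i $ k * D $ k $ i) = 0"
    by (intro sum.neutral ballI)
  thus ?thesis by (simp add: trace_def matrix_matrix_mult_def)
qed

lemma pd_psd: "pd A \<Longrightarrow> psd A"
  by (auto simp: pd_def psd_def) (metis inner_zero_left matrix_vector_mult_0_right order_refl order_less_imp_le)

lemma Sh_facts:
  fixes Sh :: "real^'n^'n"
  assumes "pd Sh"
  shows "pd (matrix_inv Sh)" "symm (matrix_inv Sh)" "Sh ** matrix_inv Sh = mat 1" "matrix_inv Sh ** Sh = mat 1"
    "0 < det Sh"
  using pd_inv[OF assms] inv_props[OF pd_invertible[OF assms]] pd_det_pos[OF assms] by auto

lemma weak_dual:
  fixes Sh :: "real^'n^'n"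
  assumes Sh: "pd Sh" and C: "(lam, G, T) \<in> C0 Sh" and F: "(R, S) \<in> primal_feasible Sh \<delta>"
  shows "Jdual Sh \<delta> lam G T \<le> trace R"
    "Jdual Sh \<delta> lam G T = trace R \<Longrightarrow> trace ((mat 1 + G - offdiag T) ** R) = 0 \<and> trace (G ** (S - R)) = 0
       \<and> S = lam *\<^sub>R matrix_inv (lam *\<^sub>R matrix_inv Sh - G + offdiag T)"
proof -
  define P where "P = matrix_inv Sh"
  define N where "N = P + (1/lam) *\<^sub>R (offdiag T - G)"
  define L where "L = mat 1 + G - offdiag T"
  define D where "D = S - R"
  define n where "n = real CARD('n)"
  have Cs: "symm G" "symm T" "lam > 0" "psd L" "psd G" "pd N"
    using C unfolding C0_def L_def N_def P_def by auto
  have Fs: "symm R" "symm S" "psd R" "psd D" "offdiag D = 0" "pd S" "2 * KL S Sh \<le> \<delta>"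
    using F unfolding primal_feasible_def D_def by auto
  have J: "Jdual Sh \<delta> lam G T = lam * (ln (det N) + ln (det Sh) - \<delta>)"
    unfolding Jdual_def N_def P_def ..
  have KL: "- ln (det S) + ln (det Sh) + trace (P ** S) - n \<le> \<delta>"
    using Fs(7) unfolding KL_def P_def n_def by (simp add: trace_mul_sym[of S])
  have t1: "0 \<le> trace (L ** R)" by (rule trace_psd(1)[OF Cs(4) Fs(3)])
  have t2: "0 \<le> trace (G ** D)" by (rule trace_psd(1)[OF Cs(5) Fs(4)])
  have lnNS: "ln (det (N ** S)) = ln (det N) + ln (det S)"
    using pd_det_pos[OF Cs(6)] pd_det_pos[OF Fs(6)] by (simp add: det_mul ln_mult)
  have t3: "ln (det (N ** S)) \<le> trace (N ** S) - n" unfolding n_def by (rule logdet_ineq(1)[OF Cs(6) Fs(6)])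
  have zT: "trace (offdiag T ** S) - trace (offdiag T ** R) = 0"
    using trace_offdiag_zero[OF Fs(5), of T] unfolding D_def by (simp add: mm_diff_l trace_sub)
  have ident: "trace R = trace (L ** R) + trace (G ** D) + lam * trace (N ** S) - lam * trace (P ** S)"
  proof -
    have "lam *\<^sub>R N = lam *\<^sub>R P + (offdiag T - G)" using Cs(3) unfolding N_def
      by (simp add: scaleR_add_right)
    hence eqN: "(lam *\<^sub>R N) ** S = (lam *\<^sub>R P + (offdiag T - G)) ** S" by simp
    have "lam * trace (N ** S) = trace ((lam *\<^sub>R N) ** S)" by (simp only: scalar_matrix_assoc[symmetric] trace_scale)
    also have "\<dots> = lam * trace (P ** S) + trace (offdiag T ** S) - trace (G ** S)"
      unfolding eqN by (simp add: mm_add_r mm_diff_r trace_add trace_sub scalar_matrix_assoc[symmetric] trace_scale)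
    finally have "lam * trace (N ** S) = lam * trace (P ** S) + trace (offdiag T ** S) - trace (G ** S)" .
    moreover have "trace (L ** R) = trace R + trace (G ** R) - trace (offdiag T ** R)"
      unfolding L_def by (simp add: mm_add_r mm_diff_r trace_add trace_sub)
    moreover have "trace (G ** D) = trace (G ** S) - trace (G ** R)"
      unfolding D_def by (simp add: mm_diff_l trace_sub)
    ultimately show ?thesis using zT by linarith
  qed
  have main: "trace R - Jdual Sh \<delta> lam G T = trace (L ** R) + trace (G ** D)
      + lam * (trace (N ** S) - n - ln (det (N ** S))) + lam * (\<delta> - (- ln (det S) + ln (det Sh) + trace (P ** S) - n))"
    unfolding ident J lnNS by (simp add: algebra_simps)
  have s3: "0 \<le> lam * (trace (N ** S) - n - ln (det (N ** S)))" using t3 Cs(3) by simp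
  have s4: "0 \<le> lam * (\<delta> - (- ln (det S) + ln (det Sh) + trace (P ** S) - n))" using KL Cs(3) by simp
  show "Jdual Sh \<delta> lam G T \<le> trace R" using main t1 t2 s3 s4 by linarith
  assume eq: "Jdual Sh \<delta> lam G T = trace R"
  have e1: "trace (L ** R) = 0" and e2: "trace (G ** D) = 0"
    and e3: "lam * (trace (N ** S) - n - ln (det (N ** S))) = 0"
    using main t1 t2 s3 s4 eq by linarith+
  have "ln (det (N ** S)) = trace (N ** S) - real CARD('n)" using e3 Cs(3) unfolding n_def by simp
  hence NS: "N ** S = mat 1" by (rule logdet_ineq(2)[OF Cs(6) Fs(6)])
  have Meq: "lam *\<^sub>R P - G + offdiag T = lam *\<^sub>R N" using Cs(3) unfolding N_def
    by (simp add: scaleR_add_right algebra_simps)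
  have "(lam *\<^sub>R N) ** ((1/lam) *\<^sub>R S) = mat 1" using Cs(3) NS
    by (simp add: matrix_scalar_ac scalar_matrix_assoc[symmetric])
  hence "matrix_inv (lam *\<^sub>R N) = (1/lam) *\<^sub>R S" by (rule inv_unique)
  hence "S = lam *\<^sub>R matrix_inv (lam *\<^sub>R P - G + offdiag T)" using Cs(3) Meq by simp
  thus "trace ((mat 1 + G - offdiag T) ** R) = 0 \<and> trace (G ** (S - R)) = 0
       \<and> S = lam *\<^sub>R matrix_inv (lam *\<^sub>R matrix_inv Sh - G + offdiag T)"
    using e1 e2 unfolding L_def D_def P_def by simp
qed

lemma lemL1:
  fixes \<alpha> \<beta> :: real
  assumes "\<And>s. s > 0 \<Longrightarrow> 0 \<le> \<alpha> + s * \<beta>"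
  shows "0 \<le> \<beta>"
proof (rule ccontr)
  assume "\<not> 0 \<le> \<beta>"
  hence b: "\<beta> < 0" by simp
  define s where "s = (\<bar>\<alpha>\<bar> + 1) / (- \<beta>)"
  have s: "s > 0" using b unfolding s_def by (intro divide_pos_pos) auto
  have "s * \<beta> = - (\<bar>\<alpha>\<bar> + 1)" using b unfolding s_def by (simp add: field_simps)
  thus False using assms[OF s] by linarith
qed

lemma lemL2:
  fixes \<alpha> \<beta> :: real
  assumes "\<And>s. 0 \<le> \<alpha> + s * \<beta>"
  shows "\<beta> = 0"
proof -
  have "0 \<le> \<beta>" by (rule lemL1[of \<alpha>]) (rule assms)
  moreover have "0 \<le> -\<beta>"
  proof (rule lemL1[of \<alpha>])
    fix s :: real
    have "0 \<le> \<alpha> + (-s) * \<beta>" by (rule assms)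
    thus "0 \<le> \<alpha> + s * (-\<beta>)" by simp
  qed
  ultimately show ?thesis by simp
qed

lemma lemL3:
  fixes \<alpha> \<beta> :: real
  assumes "\<And>s. s > 0 \<Longrightarrow> 0 \<le> \<alpha> + s * \<beta>"
  shows "0 \<le> \<alpha>"
proof (rule ccontr)
  assume "\<not> 0 \<le> \<alpha>"
  hence a: "\<alpha> < 0" by simp
  define s where "s = (- \<alpha>) / (2 * (\<bar>\<beta>\<bar> + 1))"
  have s: "s > 0" using a unfolding s_def by (intro divide_pos_pos) auto
  have "s * \<bar>\<beta>\<bar> \<le> s * (\<bar>\<beta>\<bar> + 1)" using s by simp
  also have "s * (\<bar>\<beta>\<bar> + 1) = - \<alpha> / 2" unfolding s_def by (simp add: field_simps)
  finally have h: "s * \<bar>\<beta>\<bar> \<le> - \<alpha> / 2" .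
  have "s * \<beta> \<le> s * \<bar>\<beta>\<bar>" using s by (intro mult_left_mono) auto
  hence "s * \<beta> \<le> - \<alpha> / 2" using h by linarith
  thus False using assms[OF s] a by linarith
qed

lemma inner_transpose: "transpose (A::real^'n^'n) \<bullet> transpose B = A \<bullet> B"
  by (simp add: inner_trace matrix_transpose_mul[symmetric] trace_mul_sym[of A "transpose B"])
     (metis inner_trace inner_commute trace_mul_sym)

definition outer :: "real^'n \<Rightarrow> real^'n^'n" where "outer x = (\<chi> i j. x$i * x$j)"

lemma outer_psd: "psd (outer (x::real^'n))"
  unfolding psd_def symm_def
proof (intro conjI allI)
  show "transpose (outer x) = outer x" by (simp add: outer_def transpose_def vec_eq_iff mult.commute)
  fix y :: "real^'n"
  have "y \<bullet> (outer x *v y) = (x \<bullet> y)^2"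
    by (simp add: outer_def inner_vec_def matrix_vector_mult_def power2_eq_square sum_distrib_left
        sum_distrib_right mult_ac)
  thus "0 \<le> y \<bullet> (outer x *v y)" by simp
qed

lemma inner_outer: "Y \<bullet> outer x = x \<bullet> ((Y::real^'n^'n) *v x)"
  by (simp add: outer_def inner_vec_def matrix_vector_mult_def sum_distrib_left mult_ac)

definition diagnn :: "real^'n^'n \<Rightarrow> bool" where
  "diagnn K \<longleftrightarrow> (\<forall>i j. i \<noteq> j \<longrightarrow> K$i$j = 0) \<and> (\<forall>i. 0 \<le> K$i$i)"

lemma diagnn_eq: "diagnn K \<Longrightarrow> K = diagm (\<lambda>i. K$i$i)"
  by (auto simp: diagnn_def diagm_def vec_eq_iff)

lemma diagm_quad: "x \<bullet> (diagm d *v x) = (\<Sum>i\<in>UNIV. d i * (x$i)^2)"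
proof -
  have "(diagm d *v x) $ i = d i * x$i" for i
  proof -
    have "(\<Sum>j\<in>UNIV. (if i = j then d i else 0) * x$j) = (\<Sum>j\<in>UNIV. if j = i then d i * x$i else 0)"
      by (intro sum.cong) auto
    thus ?thesis by (simp add: matrix_vector_mult_def diagm_def)
  qed
  thus ?thesis by (simp add: inner_vec_def power2_eq_square mult_ac)
qed

lemma diagnn_psd: "diagnn (K::real^'n^'n) \<Longrightarrow> psd K"
proof -
  assume K: "diagnn K"
  have e: "K = diagm (\<lambda>i. K$i$i)" by (rule diagnn_eq[OF K])
  show "psd K" unfolding psd_def symm_def
  proof (intro conjI allI)
    show "transpose K = K" by (subst e, simp, rule e[symmetric])
    fix x :: "real^'n"
    have "x \<bullet> (K *v x) = (\<Sum>i\<in>UNIV. K$i$i * (x$i)^2)" by (subst e, rule diagm_quad)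
    also have "\<dots> \<ge> 0" using K by (intro sum_nonneg) (simp add: diagnn_def)
    finally show "0 \<le> x \<bullet> (K *v x)" .
  qed
qed

lemma inner_diag_axis: "Y \<bullet> diagm (\<lambda>j. if j = i then 1 else 0) = (Y::real^'n^'n) $ i $ i"
proof -
  have "Y \<bullet> diagm (\<lambda>j. if j = i then 1 else 0) = (\<Sum>r\<in>UNIV. \<Sum>c\<in>UNIV. Y$r$c * (if r = c \<and> r = i then 1 else 0))"
    unfolding inner_vec_def diagm_def by (intro sum.cong refl) auto
  also have "\<dots> = (\<Sum>r\<in>UNIV. if r = i then Y$i$i else 0)"
  proof (intro sum.cong refl)
    fix r
    have "(\<Sum>c\<in>UNIV. Y$r$c * (if r = c \<and> r = i then 1 else 0)) = (\<Sum>c\<in>UNIV. if c = r then (if r = i then Y$i$i else 0) else 0)"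
      by (intro sum.cong) auto
    thus "(\<Sum>c\<in>UNIV. Y$r$c * (if r = c \<and> r = i then 1 else 0)) = (if r = i then Y$i$i else 0)" by simp
  qed
  finally show ?thesis by simp
qed

lemma diagnn_axis: "diagnn (diagm (\<lambda>j. if j = i then 1 else 0))"
  by (simp add: diagnn_def diagm_def)

lemma pd_scale: "pd A \<Longrightarrow> c > 0 \<Longrightarrow> pd (c *\<^sub>R (A::real^'n^'n))"
  by (auto simp: pd_def symm_def transpose_scalar mv_scale)

lemma pd_of_pos:
  fixes Q :: "real^'n^'n"
  assumes Q: "transpose Q ** Q = mat 1" "Q ** transpose Q = mat 1" and d: "\<And>i. 0 < d i"
  shows "pd (Q ** diagm d ** transpose Q)"
  unfolding pd_def symm_def
proof (intro conjI allI impI symm_QDQ)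
  fix x :: "real^'n" assume x: "x \<noteq> 0"
  let ?y = "transpose Q *v x"
  have "Q *v ?y = x" using Q(2) by (simp add: matrix_vector_mul_assoc del: transpose_matrix_vector)
  hence "?y \<noteq> 0" using x by auto
  then obtain i where i: "?y $ i \<noteq> 0" by (metis vec_eq_iff zero_index)
  have "0 < d i * (?y $ i)^2" using d i by simp
  also have "\<dots> \<le> (\<Sum>j\<in>UNIV. d j * (?y $ j)^2)"
  proof (rule member_le_sum)
    fix j show "0 \<le> d j * (?y $ j)^2" using d[of j] by simp
  qed auto
  finally show "0 < x \<bullet> ((Q ** diagm d ** transpose Q) *v x)" unfolding QDQ_quad .
qed

lemma pd_shift:
  fixes A :: "real^'n^'n"
  assumes "pd A"
  shows "\<exists>e>0. pd (A - e *\<^sub>R mat 1)"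
proof -
  obtain Q :: "real^'n^'n" and d where Q: "transpose Q ** Q = mat 1" "Q ** transpose Q = mat 1"
     "A = Q ** diagm d ** transpose Q" "\<And>i. 0 < d i"
    using pd_spectral[OF assms] by blast
  define e where "e = Min (range d) / 2"
  have fin: "finite (range d)" by simp
  have mpos: "0 < Min (range d)" using Q(4) fin by (auto simp: Min_gr_iff)
  have le: "Min (range d) \<le> d i" for i using fin by simp
  have e: "e > 0" using mpos unfolding e_def by simp
  have "A - e *\<^sub>R mat 1 = Q ** diagm (\<lambda>i. d i - e) ** transpose Q"
  proof -
    have "diagm (\<lambda>i. d i - e) = diagm d - e *\<^sub>R mat 1"
      by (simp add: diagm_def mat_def vec_eq_iff)
    hence "Q ** diagm (\<lambda>i. d i - e) ** transpose Q = Q ** diagm d ** transpose Q - e *\<^sub>R (Q ** transpose Q)"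
      by (simp add: mm_diff_l mm_diff_r matrix_scalar_ac scalar_matrix_assoc[symmetric])
    thus ?thesis using Q(2,3) by simp
  qed
  moreover have "pd (Q ** diagm (\<lambda>i. d i - e) ** transpose Q)"
  proof (rule pd_of_pos[OF Q(1,2)])
    fix i show "0 < d i - e" using le[of i] mpos unfolding e_def by linarith
  qed
  ultimately show ?thesis using e by auto
qed

lemma nonpd_unbounded:
  fixes M :: "real^'n^'n"
  assumes sM: "transpose M = M" and npd: "\<not> pd M"
  shows "\<exists>K0. \<forall>s>0. \<exists>S. pd S \<and> det S = s \<and> trace (M ** S) \<le> K0"
proof -
  obtain Q :: "real^'n^'n" and m where Q: "transpose Q ** Q = mat 1" "Q ** transpose Q = mat 1"
     "M = Q ** diagm m ** transpose Q"
    using spectral_ex[OF sM] by blast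
  obtain k where k: "m k \<le> 0"
  proof -
    have "\<not> (\<forall>i. 0 < m i)" using pd_of_pos[OF Q(1,2)] npd Q(3) by auto
    thus ?thesis using that by (meson not_le)
  qed
  have "\<forall>s>0. \<exists>S. pd S \<and> det S = s \<and> trace (M ** S) \<le> (\<Sum>i\<in>UNIV. \<bar>m i\<bar>)"
  proof (intro allI impI)
    fix s :: real assume s: "s > 0"
    define \<sigma> where "\<sigma> = (\<lambda>i. if i = k then s else 1)"
    define S where "S = Q ** diagm \<sigma> ** transpose Q"
    have pos: "0 < \<sigma> i" for i using s by (simp add: \<sigma>_def)
    have "pd S" unfolding S_def by (rule pd_of_pos[OF Q(1,2) pos])
    moreover have "det S = s"
    proof -
      have "det S = prod \<sigma> UNIV" unfolding S_def by (rule det_QDQ[OF Q(1)])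
      also have "\<dots> = \<sigma> k * prod \<sigma> (UNIV - {k})" by (simp add: prod.remove)
      also have "prod \<sigma> (UNIV - {k}) = 1" by (intro prod.neutral) (simp add: \<sigma>_def)
      finally show ?thesis by (simp add: \<sigma>_def)
    qed
    moreover have "trace (M ** S) \<le> (\<Sum>i\<in>UNIV. \<bar>m i\<bar>)"
    proof -
      have "trace (M ** S) = (\<Sum>i\<in>UNIV. m i * \<sigma> i)"
        unfolding S_def Q(3) QDQ_mult[OF Q(1)] trace_QDQ[OF Q(1)] ..
      also have "\<dots> \<le> (\<Sum>i\<in>UNIV. \<bar>m i\<bar>)"
      proof (rule sum_mono)
        fix i
        show "m i * \<sigma> i \<le> \<bar>m i\<bar>"
        proof (cases "i = k")
          case True
          hence "m i * \<sigma> i \<le> 0" using k s by (simp add: \<sigma>_def mult_nonpos_nonneg)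
          thus ?thesis by linarith
        next
          case False thus ?thesis by (simp add: \<sigma>_def)
        qed
      qed
      finally show ?thesis .
    qed
    ultimately show "\<exists>S. pd S \<and> det S = s \<and> trace (M ** S) \<le> (\<Sum>i\<in>UNIV. \<bar>m i\<bar>)" by blast
  qed
  thus ?thesis by blast
qed

lemma offdiag_transpose: "transpose (offdiag A) = offdiag (transpose (A::real^'n^'n))"
  by (simp add: offdiag_def transpose_def vec_eq_iff eq_commute)
lemma offdiag_offdiag: "offdiag (offdiag A) = offdiag (A::real^'n^'n)"
  by (simp add: offdiag_def vec_eq_iff)
lemma offdiag_scale: "offdiag (c *\<^sub>R A) = c *\<^sub>R offdiag (A::real^'n^'n)"
  by (simp add: offdiag_def vec_eq_iff)
lemma offdiag_0: "offdiag (0::real^'n^'n) = 0"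
  by (simp add: offdiag_def vec_eq_iff)
lemma offdiag_diff: "offdiag (A - B) = offdiag A - offdiag (B::real^'n^'n)"
  by (simp add: offdiag_def vec_eq_iff)

lemma psd_trace_nonneg: "psd (R::real^'n^'n) \<Longrightarrow> 0 \<le> trace R"
proof -
  assume R: "psd R"
  have "psd (mat 1 :: real^'n^'n)" by (simp add: psd_def symm_def)
  from trace_psd(1)[OF this R] show ?thesis by simp
qed

lemma psd_comb:
  fixes A B :: "real^'n^'n"
  assumes "psd A" "psd B" "0 \<le> u" "0 \<le> v"
  shows "psd (u *\<^sub>R A + v *\<^sub>R B)"
  unfolding psd_def symm_def
proof (intro conjI allI)
  show "transpose (u *\<^sub>R A + v *\<^sub>R B) = u *\<^sub>R A + v *\<^sub>R B"
    using assms by (simp add: psd_def symm_def transpose_add transpose_scalar)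
  fix x :: "real^'n"
  have "x \<bullet> ((u *\<^sub>R A + v *\<^sub>R B) *v x) = u * (x \<bullet> (A *v x)) + v * (x \<bullet> (B *v x))"
    by (simp add: matrix_vector_mult_add_rdistrib mv_scale inner_add_right)
  also have "\<dots> \<ge> 0" using assms by (simp add: psd_def)
  finally show "0 \<le> x \<bullet> ((u *\<^sub>R A + v *\<^sub>R B) *v x)" .
qed

lemma diagnn_comb: "diagnn A \<Longrightarrow> diagnn B \<Longrightarrow> 0 \<le> u \<Longrightarrow> 0 \<le> v \<Longrightarrow> diagnn (u *\<^sub>R A + v *\<^sub>R (B::real^'n^'n))"
  by (simp add: diagnn_def)

definition fKL :: "real^'n^'n \<Rightarrow> real^'n^'n \<Rightarrow> real" where
  "fKL Sh S = - ln (det S) + ln (det Sh) + trace (S ** matrix_inv Sh) - real CARD('n)"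

lemma fKL_eq: "2 * KL S Sh = fKL Sh S"
  by (simp add: KL_def fKL_def)

lemma fKL_convex:
  fixes S1 S2 Sh :: "real^'n^'n"
  assumes "pd S1" "pd S2" "0 \<le> u" "u \<le> 1"
  shows "fKL Sh (u *\<^sub>R S1 + (1 - u) *\<^sub>R S2) \<le> u * fKL Sh S1 + (1 - u) * fKL Sh S2"
proof -
  have c: "u * ln (det S1) + (1 - u) * ln (det S2) \<le> ln (det (u *\<^sub>R S1 + (1 - u) *\<^sub>R S2))"
    by (rule logdet_concave[OF assms])
  have t: "trace ((u *\<^sub>R S1 + (1 - u) *\<^sub>R S2) ** matrix_inv Sh) =
      u * trace (S1 ** matrix_inv Sh) + (1 - u) * trace (S2 ** matrix_inv Sh)"
    by (simp only: mm_add_r scalar_matrix_assoc[symmetric] trace_add trace_scale)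
  show ?thesis unfolding fKL_def t using c by (simp add: algebra_simps)
qed

lemma vec_self_neg: "(x::'a::real_vector) = - x \<Longrightarrow> x = 0"
proof -
  assume h: "x = - x"
  have "2 *\<^sub>R x = x + x" by (simp add: scaleR_2)
  also have "\<dots> = x + - x" using h by (metis)
  finally have "2 *\<^sub>R x = 0" by simp
  thus "x = 0" by simp
qed

lemma symm_from_antisym:
  fixes Y :: "real^'n^'n"
  assumes "\<And>N. transpose N = - N \<Longrightarrow> Y \<bullet> N = 0"
  shows "transpose Y = Y"
proof -
  define N where "N = Y - transpose Y"
  have tN: "transpose N = - N" unfolding N_def by (simp add: transpose_diff)
  have yN: "Y \<bullet> N = 0" by (rule assms[OF tN])
  have "transpose Y \<bullet> N = transpose (transpose Y) \<bullet> transpose N" by (simp only: inner_transpose)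
  also have "\<dots> = - (Y \<bullet> N)" by (simp add: tN)
  finally have "transpose Y \<bullet> N = 0" using yN by simp
  hence "N \<bullet> N = 0" using yN unfolding N_def[symmetric] by (simp add: N_def inner_diff_left)
  hence "N = 0" by simp
  thus ?thesis unfolding N_def by simp
qed

lemma inner_mat1: "mat 1 \<bullet> (X::real^'n^'n) = trace X"
  by (simp add: inner_trace)

lemma psd_0: "psd (0::real^'n^'n)" by (simp add: psd_def symm_def transpose_def vec_eq_iff)
lemma diagnn_0: "diagnn (0::real^'n^'n)" by (simp add: diagnn_def)
lemma psd_scale: "psd A \<Longrightarrow> 0 \<le> c \<Longrightarrow> psd (c *\<^sub>R (A::real^'n^'n))"
  using psd_comb[of A A c 0] by simp

definition Aset :: "real^'n^'n \<Rightarrow> real \<Rightarrow> real \<Rightarrow> (real \<times> real \<times> (real^'n^'n) \<times> (real^'n^'n)) set" where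
  "Aset Sh \<delta> p = {z. \<exists>R S a b K1 K2 N1 N2. z = (trace R - p + a, fKL Sh S - \<delta> + b, R - K1 + N1, S - R - K2 + N2)
      \<and> symm R \<and> pd S \<and> 0 < a \<and> 0 \<le> b \<and> psd K1 \<and> diagnn K2 \<and> transpose N1 = - N1 \<and> transpose N2 = - N2}"

lemma Aset_convex: "convex (Aset Sh \<delta> p)"
proof (rule convexI)
  fix x y and u v :: real
  assume x: "x \<in> Aset Sh \<delta> p" and y: "y \<in> Aset Sh \<delta> p" and u: "0 \<le> u" and v: "0 \<le> v" and uv: "u + v = 1"
  have v1: "v = 1 - u" using uv by simp
  obtain R1 S1 a1 b1 K1 K2 N1 N2 where X: "x = (trace R1 - p + a1, fKL Sh S1 - \<delta> + b1, R1 - K1 + N1, S1 - R1 - K2 + N2)"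
    "symm R1" "pd S1" "0 < a1" "0 \<le> b1" "psd K1" "diagnn K2" "transpose N1 = - N1" "transpose N2 = - N2"
    using x unfolding Aset_def by blast
  obtain R2 S2 a2 b2 K1' K2' N1' N2' where Y: "y = (trace R2 - p + a2, fKL Sh S2 - \<delta> + b2, R2 - K1' + N1', S2 - R2 - K2' + N2')"
    "symm R2" "pd S2" "0 < a2" "0 \<le> b2" "psd K1'" "diagnn K2'" "transpose N1' = - N1'" "transpose N2' = - N2'"
    using y unfolding Aset_def by blast
  define R where "R = u *\<^sub>R R1 + v *\<^sub>R R2"
  define S where "S = u *\<^sub>R S1 + v *\<^sub>R S2"
  define a where "a = u * a1 + v * a2"
  define b where "b = u * (fKL Sh S1 + b1) + v * (fKL Sh S2 + b2) - fKL Sh S"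
  define K1c where "K1c = u *\<^sub>R K1 + v *\<^sub>R K1'"
  define K2c where "K2c = u *\<^sub>R K2 + v *\<^sub>R K2'"
  define N1c where "N1c = u *\<^sub>R N1 + v *\<^sub>R N1'"
  define N2c where "N2c = u *\<^sub>R N2 + v *\<^sub>R N2'"
  have u1: "u \<le> 1" using uv v by simp
  have eq: "u *\<^sub>R x + v *\<^sub>R y = (trace R - p + a, fKL Sh S - \<delta> + b, R - K1c + N1c, S - R - K2c + N2c)"
  proof -
    have tR: "trace R = u * trace R1 + v * trace R2" unfolding R_def by (simp only: trace_add trace_scale)
    have c1: "u * (trace R1 - p + a1) + v * (trace R2 - p + a2) = trace R - p + a"
      unfolding a_def tR v1 by (simp add: algebra_simps)
    have c2: "u * (fKL Sh S1 - \<delta> + b1) + v * (fKL Sh S2 - \<delta> + b2) = fKL Sh S - \<delta> + b"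
      unfolding b_def v1 by (simp add: algebra_simps)
    have c3: "u *\<^sub>R (R1 - K1 + N1) + v *\<^sub>R (R2 - K1' + N1') = R - K1c + N1c"
      unfolding R_def K1c_def N1c_def by (simp add: algebra_simps)
    have c4: "u *\<^sub>R (S1 - R1 - K2 + N2) + v *\<^sub>R (S2 - R2 - K2' + N2') = S - R - K2c + N2c"
      unfolding R_def S_def K2c_def N2c_def by (simp add: algebra_simps)
    show ?thesis unfolding X(1) Y(1) using c1 c2 c3 c4 by simp
  qed
  have sR: "symm R" using X(2) Y(2) unfolding R_def symm_def by (simp add: transpose_add transpose_scalar)
  have pS: "pd S" unfolding S_def v1 by (rule pd_comb[OF X(3) Y(3) u u1])
  have pa: "0 < a"
  proof (cases "u = 0")
    case True thus ?thesis using Y(4) v1 unfolding a_def by simp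
  next
    case False
    hence "0 < u * a1" using u X(4) by simp
    moreover have "0 \<le> v * a2" using v Y(4) by simp
    ultimately show ?thesis unfolding a_def by linarith
  qed
  have pb: "0 \<le> b"
  proof -
    have "fKL Sh S \<le> u * fKL Sh S1 + v * fKL Sh S2" unfolding S_def v1 by (rule fKL_convex[OF X(3) Y(3) u u1])
    moreover have "0 \<le> u * b1" "0 \<le> v * b2" using u v X(5) Y(5) by simp_all
    ultimately show ?thesis unfolding b_def by (simp add: algebra_simps)
  qed
  have pK1: "psd K1c" unfolding K1c_def by (rule psd_comb[OF X(6) Y(6) u v])
  have pK2: "diagnn K2c" unfolding K2c_def by (rule diagnn_comb[OF X(7) Y(7) u v])
  have tN1: "transpose N1c = - N1c" unfolding N1c_def using X(8) Y(8) by (simp add: transpose_add transpose_scalar)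
  have tN2: "transpose N2c = - N2c" unfolding N2c_def using X(9) Y(9) by (simp add: transpose_add transpose_scalar)
  show "u *\<^sub>R x + v *\<^sub>R y \<in> Aset Sh \<delta> p" unfolding Aset_def mem_Collect_eq eq
    using sR pS pa pb pK1 pK2 tN1 tN2 by blast
qed

lemma diagnn_offdiag: "diagnn K \<Longrightarrow> offdiag K = 0"
  by (simp add: diagnn_def offdiag_def vec_eq_iff)

lemma Aset_zero:
  fixes Sh :: "real^'n^'n"
  assumes lower: "\<And>R S. (R, S) \<in> primal_feasible Sh \<delta> \<Longrightarrow> p \<le> trace R"
  shows "0 \<notin> Aset Sh \<delta> p"
proof
  assume "0 \<in> Aset Sh \<delta> p"
  then obtain R S a b K1 K2 N1 N2 where X: "(0::real \<times> real \<times> (real^'n^'n) \<times> (real^'n^'n)) = (trace R - p + a, fKL Sh S - \<delta> + b, R - K1 + N1, S - R - K2 + N2)"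
    "symm R" "pd S" "0 < a" "0 \<le> b" "psd K1" "diagnn K2" "transpose N1 = - N1" "transpose N2 = - N2"
    unfolding Aset_def by blast
  have e1: "trace R - p + a = 0" "fKL Sh S - \<delta> + b = 0" "R - K1 + N1 = 0" "S - R - K2 + N2 = 0"
    using X(1) by (simp_all add: zero_prod_def)
  have sS: "transpose S = S" using X(3) by (simp add: pd_def symm_def)
  have sR: "transpose R = R" using X(2) by (simp add: symm_def)
  have sK1: "transpose K1 = K1" using X(6) by (simp add: psd_def symm_def)
  have sK2: "transpose K2 = K2" using diagnn_psd[OF X(7)] by (simp add: psd_def symm_def)
  have "N1 = K1 - R" using e1(3) by (simp add: algebra_simps)
  hence "transpose N1 = N1" using sR sK1 by (simp add: transpose_diff)
  hence "N1 = 0" using X(8) by (metis vec_self_neg)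
  hence RK: "R = K1" using e1(3) by simp
  have "N2 = K2 - (S - R)" using e1(4) by (simp add: algebra_simps)
  hence "transpose N2 = N2" using sR sS sK2 by (simp add: transpose_diff)
  hence "N2 = 0" using X(9) by (metis vec_self_neg)
  hence SR: "S - R = K2" using e1(4) by simp
  have "(R, S) \<in> primal_feasible Sh \<delta>"
    unfolding primal_feasible_def mem_Collect_eq case_prod_conv
    using X(2,3,5) RK SR X(6) diagnn_psd[OF X(7)] diagnn_offdiag[OF X(7)] e1(2)
    by (auto simp: pd_def fKL_eq)
  hence "p \<le> trace R" by (rule lower)
  thus False using e1(1) X(4) by linarith
qed

lemma mv_neg: "(- (A::real^'n^'m)) *v x = - (A *v x)"
  by (simp add: matrix_vector_mult_def vec_eq_iff sum_negf)

lemma mm_neg_l: "(- (A::real^'n^'m)) ** B = - (A ** B)"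
  by (simp add: matrix_matrix_mult_def vec_eq_iff sum_negf)

lemma trace_neg: "trace (- (A::real^'n^'n)) = - trace A"
  by (simp add: trace_def sum_negf)

lemma trace_Y_le:
  fixes Y :: "real^'n^'n"
  shows "(\<And>i. Y$i$i \<le> 0) \<Longrightarrow> trace Y \<le> 0"
  unfolding trace_def by (rule sum_nonpos) auto

lemma multipliers:
  fixes Sh :: "real^'n^'n"
  assumes Sh: "pd Sh" and dpos: "0 < \<delta>"
    and lower: "\<And>R S. (R, S) \<in> primal_feasible Sh \<delta> \<Longrightarrow> p \<le> trace R"
  shows "\<exists>lam Z. 0 \<le> lam \<and> transpose Z = Z \<and> (\<forall>i. Z$i$i \<le> 0) \<and> psd (mat 1 - Z)
     \<and> (\<forall>S. pd S \<longrightarrow> p \<le> lam * (fKL Sh S - \<delta>) + trace (Z ** S))"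
proof -
  have sSh: "symm Sh" using Sh by (simp add: pd_def)
  have z0: "0 \<notin> Aset Sh \<delta> p" by (rule Aset_zero[OF lower])
  have "\<exists>a. a \<noteq> 0 \<and> (\<forall>x\<in>Aset Sh \<delta> p. 0 \<le> inner a x)"
    by (rule separating_hyperplane_set_0[OF Aset_convex z0])
  then obtain w where w: "w \<noteq> 0" "\<And>z. z \<in> Aset Sh \<delta> p \<Longrightarrow> 0 \<le> w \<bullet> z"
    by blast
  obtain \<mu> \<nu> Y1 Y2 where wd: "w = (\<mu>, \<nu>, Y1, Y2)" by (metis prod.collapse)
  have key: "0 \<le> \<mu> * (trace R - p + a) + \<nu> * (fKL Sh S - \<delta> + b) + Y1 \<bullet> (R - K1 + N1) + Y2 \<bullet> (S - R - K2 + N2)"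
    if "symm R" "pd S" "0 < a" "0 \<le> b" "psd K1" "diagnn K2" "transpose N1 = - N1" "transpose N2 = - N2"
    for R S a b K1 K2 N1 N2
  proof -
    have "(trace R - p + a, fKL Sh S - \<delta> + b, R - K1 + N1, S - R - K2 + N2) \<in> Aset Sh \<delta> p"
      unfolding Aset_def mem_Collect_eq using that by blast
    from w(2)[OF this] show ?thesis unfolding wd by (simp add: algebra_simps)
  qed
  have f0: "fKL Sh Sh = 0"
    using Sh_facts(3)[OF Sh] Sh_facts(5)[OF Sh] by (simp add: fKL_def trace_I)
  have t0: "transpose (0::real^'n^'n) = - 0" by (simp add: transpose_def vec_eq_iff)
  note base = sSh Sh psd_0 diagnn_0 t0
  have mu: "0 \<le> \<mu>"
  proof (rule lemL1[of "\<mu> * (trace Sh - p) + \<nu> * (fKL Sh Sh - \<delta>) + Y1 \<bullet> Sh"])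
    fix s :: real assume s: "0 < s"
    from key[of Sh Sh s 0 0 0 0 0] base s
    show "0 \<le> \<mu> * (trace Sh - p) + \<nu> * (fKL Sh Sh - \<delta>) + Y1 \<bullet> Sh + s * \<mu>" by (simp add: algebra_simps)
  qed
  have nu: "0 \<le> \<nu>"
  proof (rule lemL1[of "\<mu> * (trace Sh - p + 1) + \<nu> * (fKL Sh Sh - \<delta>) + Y1 \<bullet> Sh"])
    fix s :: real assume s: "0 < s"
    from key[of Sh Sh 1 s 0 0 0 0] base s
    show "0 \<le> \<mu> * (trace Sh - p + 1) + \<nu> * (fKL Sh Sh - \<delta>) + Y1 \<bullet> Sh + s * \<nu>" by (simp add: algebra_simps)
  qed
  let ?\<alpha> = "\<mu> * (trace Sh - p + 1) + \<nu> * (fKL Sh Sh - \<delta>) + Y1 \<bullet> Sh"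
  have sY1: "transpose Y1 = Y1"
  proof (rule symm_from_antisym)
    fix N :: "real^'n^'n" assume N: "transpose N = - N"
    show "Y1 \<bullet> N = 0"
    proof (rule lemL2[of ?\<alpha>])
      fix s :: real
      have "transpose (s *\<^sub>R N) = - (s *\<^sub>R N)" using N by (simp add: transpose_scalar)
      from key[of Sh Sh 1 0 0 0 "s *\<^sub>R N" 0] base this
      show "0 \<le> ?\<alpha> + s * (Y1 \<bullet> N)" by (simp add: algebra_simps inner_add_right)
    qed
  qed
  have sY2: "transpose Y2 = Y2"
  proof (rule symm_from_antisym)
    fix N :: "real^'n^'n" assume N: "transpose N = - N"
    show "Y2 \<bullet> N = 0"
    proof (rule lemL2[of ?\<alpha>])
      fix s :: real
      have "transpose (s *\<^sub>R N) = - (s *\<^sub>R N)" using N by (simp add: transpose_scalar)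
      from key[of Sh Sh 1 0 0 0 0 "s *\<^sub>R N"] base this
      show "0 \<le> ?\<alpha> + s * (Y2 \<bullet> N)" by (simp add: algebra_simps inner_add_right)
    qed
  qed
  have Y1K: "Y1 \<bullet> K \<le> 0" if K: "psd K" for K
  proof -
    have "0 \<le> - (Y1 \<bullet> K)"
    proof (rule lemL1[of ?\<alpha>])
      fix s :: real assume s: "0 < s"
      have "psd (s *\<^sub>R K)" using psd_scale[OF K] s by simp
      from key[of Sh Sh 1 0 "s *\<^sub>R K" 0 0 0] base this
      show "0 \<le> ?\<alpha> + s * - (Y1 \<bullet> K)" by (simp add: algebra_simps inner_diff_right)
    qed
    thus ?thesis by simp
  qed
  have Y2d: "Y2$i$i \<le> 0" for i
  proof -
    let ?E = "diagm (\<lambda>j. if j = i then 1 else 0) :: real^'n^'n"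
    have "0 \<le> - (Y2 \<bullet> ?E)"
    proof (rule lemL1[of ?\<alpha>])
      fix s :: real assume s: "0 < s"
      have "diagnn (s *\<^sub>R ?E)" using s by (simp add: diagnn_def diagm_def)
      from key[of Sh Sh 1 0 0 "s *\<^sub>R ?E" 0 0] base this
      show "0 \<le> ?\<alpha> + s * - (Y2 \<bullet> ?E)" by (simp add: algebra_simps inner_diff_right)
    qed
    thus ?thesis by (simp add: inner_diag_axis)
  qed
  have c6: "0 \<le> \<mu> * (trace R - p) + \<nu> * (fKL Sh S - \<delta>) + Y1 \<bullet> R + Y2 \<bullet> (S - R)"
    if R: "symm R" and S: "pd S" for R S
  proof (rule lemL3[of _ \<mu>])
    fix s :: real assume s: "0 < s"
    from key[of R S s 0 0 0 0 0] base R S s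
    show "0 \<le> \<mu> * (trace R - p) + \<nu> * (fKL Sh S - \<delta>) + Y1 \<bullet> R + Y2 \<bullet> (S - R) + s * \<mu>"
      by (simp add: algebra_simps)
  qed
  define C where "C = \<mu> *\<^sub>R mat 1 + Y1 - Y2"
  have sC: "symm C" unfolding C_def symm_def using sY1 sY2 by (simp add: transpose_add transpose_diff transpose_scalar)
  have C0: "C = 0"
  proof -
    have CC: "C \<bullet> C = \<mu> * trace C + Y1 \<bullet> C - Y2 \<bullet> C"
      unfolding C_def by (simp add: inner_add_left inner_diff_left inner_mat1)
    have "C \<bullet> C = 0"
    proof (rule lemL2[of "- \<mu> * p + \<nu> * (fKL Sh Sh - \<delta>) + Y2 \<bullet> Sh"])
      fix s :: real
      have "symm (s *\<^sub>R C)" using sC by (simp add: symm_def transpose_scalar)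
      from c6[OF this Sh]
      show "0 \<le> - \<mu> * p + \<nu> * (fKL Sh Sh - \<delta>) + Y2 \<bullet> Sh + s * (C \<bullet> C)"
        unfolding CC by (simp add: trace_scale inner_diff_right algebra_simps)
    qed
    thus ?thesis by simp
  qed
  hence Y2eq: "Y2 = \<mu> *\<^sub>R mat 1 + Y1" unfolding C_def by (simp add: algebra_simps)
  have psdY1: "psd (- Y1)" unfolding psd_def symm_def
  proof (intro conjI allI)
    show "transpose (- Y1) = - Y1" using sY1 by (simp add: transpose_uminus)
    fix x :: "real^'n"
    have "Y1 \<bullet> outer x \<le> 0" by (rule Y1K[OF outer_psd])
    thus "0 \<le> x \<bullet> (- Y1 *v x)" unfolding inner_outer by (simp add: mv_neg)
  qed
  have mupos: "0 < \<mu>"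
  proof (rule ccontr)
    assume "\<not> 0 < \<mu>"
    hence m0: "\<mu> = 0" using mu by simp
    hence Y21: "Y2 = Y1" using Y2eq by simp
    obtain e where e: "e > 0" "pd (Sh - e *\<^sub>R mat 1)" using pd_shift[OF Sh] by blast
    define R0 where "R0 = Sh - e *\<^sub>R mat 1"
    have pR0: "pd R0" using e(2) unfolding R0_def .
    have sR0: "symm R0" using pR0 by (simp add: pd_def)
    have SR0: "Sh - R0 = e *\<^sub>R mat 1" unfolding R0_def by simp
    have ineq: "0 \<le> \<nu> * (- \<delta>) + Y1 \<bullet> R0 + e * trace Y1"
      using c6[OF sR0 Sh] unfolding m0 f0 SR0 Y21
      by (simp add: inner_commute[of Y1 "mat 1"] inner_mat1)
    have tr1: "0 \<le> trace ((- Y1) ** R0)" by (rule trace_psd(1)[OF psdY1 pd_psd[OF pR0]])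
    have YR: "Y1 \<bullet> R0 = - trace ((- Y1) ** R0)"
      using inner_trace_symm[OF sY1, of R0] by (simp add: mm_neg_l trace_neg)
    have trY: "trace Y1 \<le> 0" using Y2d unfolding Y21 by (rule trace_Y_le)
    have nd: "0 \<le> \<nu> * \<delta>" using nu dpos by simp
    have et: "e * trace Y1 \<le> 0" using e(1) trY by (simp add: mult_nonneg_nonpos)
    have ineq2: "0 \<le> - (\<nu> * \<delta>) - trace ((- Y1) ** R0) + e * trace Y1" using ineq YR by simp
    have z1: "trace ((- Y1) ** R0) = 0" using ineq2 nd et tr1 by linarith
    have z2: "\<nu> * \<delta> = 0" using ineq2 nd et tr1 by linarith
    have "(- Y1) ** R0 = 0" by (rule trace_psd(2)[OF psdY1 pd_psd[OF pR0] z1])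
    hence "(- Y1) ** R0 ** matrix_inv R0 = 0" by simp
    hence "- Y1 = 0" by (simp add: matrix_mul_assoc[symmetric] inv_props(1)[OF pd_invertible[OF pR0]])
    hence Y10: "Y1 = 0" by simp
    have n0: "\<nu> = 0" using z2 dpos by simp
    have "w = 0" unfolding wd using m0 n0 Y10 Y21 by (simp add: zero_prod_def)
    thus False using w(1) by simp
  qed
  define Z where "Z = (1/\<mu>) *\<^sub>R Y2"
  define lam where "lam = \<nu> / \<mu>"
  have sZ: "transpose Z = Z" unfolding Z_def using sY2 by (simp add: transpose_scalar)
  have Zd: "Z$i$i \<le> 0" for i unfolding Z_def using Y2d[of i] mupos by (simp add: divide_nonpos_pos)
  have "mat 1 - Z = (1/\<mu>) *\<^sub>R (- Y1)" unfolding Z_def Y2eq using mupos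
    by (simp add: scaleR_add_right)
  hence pZ: "psd (mat 1 - Z)" using psd_scale[OF psdY1, of "1/\<mu>"] mupos by simp
  have lam0: "0 \<le> lam" unfolding lam_def using nu mupos by simp
  have ineqS: "p \<le> lam * (fKL Sh S - \<delta>) + trace (Z ** S)" if S: "pd S" for S
  proof -
    have s0: "symm (0::real^'n^'n)" by (simp add: symm_def transpose_def vec_eq_iff)
    have "0 \<le> - \<mu> * p + \<nu> * (fKL Sh S - \<delta>) + Y2 \<bullet> S" using c6[OF s0 S] by (simp add: trace_def)
    hence "0 \<le> (1/\<mu>) * (- \<mu> * p + \<nu> * (fKL Sh S - \<delta>) + Y2 \<bullet> S)" using mupos by simp
    also have "\<dots> = - p + lam * (fKL Sh S - \<delta>) + Z \<bullet> S" unfolding lam_def Z_def using mupos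
      by (simp add: field_simps)
    also have "Z \<bullet> S = trace (Z ** S)" by (rule inner_trace_symm[OF sZ])
    finally show ?thesis by simp
  qed
  show ?thesis using lam0 sZ Zd pZ ineqS by blast
qed

lemma dual_attain:
  fixes Sh :: "real^'n^'n"
  assumes Sh: "pd Sh" and dpos: "0 < \<delta>"
    and lower: "\<And>R S. (R, S) \<in> primal_feasible Sh \<delta> \<Longrightarrow> p \<le> trace R"
    and ppos: "0 < p"
  shows "\<exists>lam G T. (lam, G, T) \<in> C0 Sh \<and> p \<le> Jdual Sh \<delta> lam G T"
proof -
  obtain lam Z where lZ: "0 \<le> lam" "transpose Z = Z" "\<And>i. Z$i$i \<le> 0" "psd (mat 1 - Z)"
     "\<And>S. pd S \<Longrightarrow> p \<le> lam * (fKL Sh S - \<delta>) + trace (Z ** S)"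
  proof -
    have "\<exists>lam Z. 0 \<le> lam \<and> transpose Z = Z \<and> (\<forall>i. Z$i$i \<le> 0) \<and> psd (mat 1 - Z)
       \<and> (\<forall>S. pd S \<longrightarrow> p \<le> lam * (fKL Sh S - \<delta>) + trace (Z ** S))"
      by (rule multipliers[of Sh \<delta> p, OF Sh dpos lower])
    thus ?thesis using that by blast
  qed
  have pd1: "pd (mat 1 :: real^'n^'n)" by (simp add: pd_def symm_def)
  have lampos: "0 < lam"
  proof (rule ccontr)
    assume "\<not> 0 < lam" hence "lam = 0" using lZ(1) by simp
    hence "p \<le> trace Z" using lZ(5)[OF pd1] by simp
    moreover have "trace Z \<le> 0" using lZ(3) by (rule trace_Y_le)
    ultimately show False using ppos by simp
  qed
  define P where "P = matrix_inv Sh"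
  have Pf: "pd P" "symm P" unfolding P_def using Sh_facts[OF Sh] by auto
  define n where "n = real CARD('n)"
  define M where "M = lam *\<^sub>R P + Z"
  have sM: "transpose M = M" unfolding M_def using Pf(2) lZ(2) by (simp add: symm_def transpose_add transpose_scalar)
  have trM: "trace (M ** S) = lam * trace (S ** P) + trace (Z ** S)" for S
    unfolding M_def by (simp add: mm_add_r scalar_matrix_assoc[symmetric] trace_add trace_scale trace_mul_sym[of P S])
  have ineqM: "p \<le> lam * (- ln (det S) + ln (det Sh) - n - \<delta>) + trace (M ** S)" if S: "pd S" for S
    using lZ(5)[OF S] unfolding trM fKL_def P_def n_def by (simp add: algebra_simps)
  have pdM: "pd M"
  proof (rule ccontr)
    assume npd: "\<not> pd M"
    obtain K0 where K0: "\<And>s. s > 0 \<Longrightarrow> \<exists>S. pd S \<and> det S = s \<and> trace (M ** S) \<le> K0"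
      using nonpd_unbounded[OF sM npd] by blast
    define c where "c = lam * (ln (det Sh) - n - \<delta>) + K0 - p + 1"
    define s where "s = exp (c / lam)"
    have s: "s > 0" unfolding s_def by simp
    obtain S where S: "pd S" "det S = s" "trace (M ** S) \<le> K0" using K0[OF s] by blast
    have "lam * ln s = c" unfolding s_def using lampos by simp
    hence "p \<le> - c + lam * (ln (det Sh) - n - \<delta>) + K0" using ineqM[OF S(1)] S(2,3)
      by (simp add: algebra_simps)
    thus False unfolding c_def by simp
  qed
  define G where "G = diagm (\<lambda>i. - Z$i$i)"
  define T where "T = offdiag Z"
  have eqZ: "offdiag T - G = Z" unfolding G_def T_def
    by (auto simp: offdiag_def diagm_def vec_eq_iff)
  have eqL: "mat 1 + G - offdiag T = mat 1 - Z" using eqZ by (simp add: algebra_simps)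
  have eqN: "matrix_inv Sh + (1/lam) *\<^sub>R (offdiag T - G) = (1/lam) *\<^sub>R M"
    unfolding eqZ M_def P_def using lampos by (simp add: scaleR_add_right)
  have inC: "(lam, G, T) \<in> C0 Sh"
  proof -
    have "symm G" unfolding G_def symm_def by simp
    moreover have "symm T" unfolding T_def symm_def using lZ(2) by (simp add: offdiag_transpose)
    moreover have "psd (mat 1 + G - offdiag T)" unfolding eqL by (rule lZ(4))
    moreover have "psd G" unfolding G_def by (rule diagnn_psd) (simp add: diagnn_def diagm_def lZ(3))
    moreover have "pd (matrix_inv Sh + (1/lam) *\<^sub>R (offdiag T - G))" unfolding eqN
      by (rule pd_scale[OF pdM]) (use lampos in simp)
    ultimately show ?thesis unfolding C0_def using lampos by simp
  qed
  define S where "S = lam *\<^sub>R matrix_inv M"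
  have invM: "invertible M" by (rule pd_invertible[OF pdM])
  have pS: "pd S" unfolding S_def by (rule pd_scale[OF pd_inv(1)[OF pdM] lampos])
  have dM: "0 < det M" by (rule pd_det_pos[OF pdM])
  have dMi: "det (matrix_inv M) = 1 / det M" using det_mult_inv[OF pdM] dM by (simp add: field_simps)
  have trMS: "trace (M ** S) = lam * n" unfolding S_def n_def
    by (simp add: matrix_scalar_ac scalar_matrix_assoc[symmetric] trace_scale inv_props(1)[OF invM] trace_I)
  have lnS: "ln (det S) = n * ln lam - ln (det M)" unfolding S_def det_scale dMi n_def
    using lampos dM by (simp add: ln_mult ln_div ln_realpow)
  have lnN: "ln (det ((1/lam) *\<^sub>R M)) = - n * ln lam + ln (det M)" unfolding det_scale n_def
    using lampos dM by (simp add: ln_mult ln_div ln_realpow)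
  have J: "Jdual Sh \<delta> lam G T = lam * (- n * ln lam + ln (det M) + ln (det Sh) - \<delta>)"
    unfolding Jdual_def eqN lnN ..
  have "p \<le> lam * (- ln (det S) + ln (det Sh) - n - \<delta>) + trace (M ** S)" by (rule ineqM[OF pS])
  also have "\<dots> = Jdual Sh \<delta> lam G T" unfolding J trMS lnS by (simp add: algebra_simps)
  finally show ?thesis using inC by blast
qed

lemma quad_bound:
  fixes A :: "real^'n^'n"
  shows "\<bar>x \<bullet> (A *v x)\<bar> \<le> (\<Sum>i\<in>UNIV. \<Sum>j\<in>UNIV. \<bar>A$i$j\<bar>) * (x \<bullet> x)"
proof -
  have "x \<bullet> (A *v x) = (\<Sum>i\<in>UNIV. \<Sum>j\<in>UNIV. A$i$j * (x$i * x$j))"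
    by (simp add: inner_vec_def matrix_vector_mult_def sum_distrib_left mult_ac)
  hence "\<bar>x \<bullet> (A *v x)\<bar> \<le> (\<Sum>i\<in>UNIV. \<bar>\<Sum>j\<in>UNIV. A$i$j * (x$i * x$j)\<bar>)"
    by (simp only: sum_abs)
  also have "\<dots> \<le> (\<Sum>i\<in>UNIV. \<Sum>j\<in>UNIV. \<bar>A$i$j * (x$i * x$j)\<bar>)"
    by (intro sum_mono sum_abs)
  also have "\<dots> \<le> (\<Sum>i\<in>UNIV. \<Sum>j\<in>UNIV. \<bar>A$i$j\<bar> * (x \<bullet> x))"
  proof (intro sum_mono)
    fix i j
    have "\<bar>x$i\<bar> * \<bar>x$j\<bar> \<le> norm x * norm x"
      by (intro mult_mono component_le_norm_cart) auto
    also have "norm x * norm x = x \<bullet> x" by (simp add: norm_eq_sqrt_inner)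
    finally have "\<bar>x$i * x$j\<bar> \<le> x \<bullet> x" by (simp add: abs_mult)
    thus "\<bar>A$i$j * (x$i * x$j)\<bar> \<le> \<bar>A$i$j\<bar> * (x \<bullet> x)" by (simp add: abs_mult mult_left_mono)
  qed
  also have "\<dots> = (\<Sum>i\<in>UNIV. \<Sum>j\<in>UNIV. \<bar>A$i$j\<bar>) * (x \<bullet> x)" by (simp add: sum_distrib_right)
  finally show ?thesis .
qed

lemma pd_diagm: "(\<And>i. 0 < d i) \<Longrightarrow> pd (diagm d :: real^'n^'n)"
  using pd_of_pos[of "mat 1 :: real^'n^'n" d] by simp

lemma explicit_dual:
  fixes Sh :: "real^'n^'n"
  assumes Sh: "pd Sh" and dmax: "\<delta> < delta_max Sh"
  shows "\<exists>lam G T. (lam, G, T) \<in> C0 Sh \<and> 0 < Jdual Sh \<delta> lam G T"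
proof -
  define P where "P = matrix_inv Sh"
  have Pf: "pd P" "symm P" unfolding P_def using Sh_facts[OF Sh] by auto
  define c where "c = (\<Sum>i\<in>UNIV. \<Sum>j\<in>UNIV. \<bar>offdiag P$i$j\<bar>)"
  have c0: "0 \<le> c" unfolding c_def by (intro sum_nonneg) auto
  define lam where "lam = 1 / (1 + c)"
  have lam: "0 < lam" "lam * c \<le> 1" using c0 unfolding lam_def by (auto simp: field_simps)
  define T where "T = (- lam) *\<^sub>R offdiag P"
  have oT: "offdiag T = (- lam) *\<^sub>R offdiag P" unfolding T_def by (simp only: offdiag_scale offdiag_offdiag)
  have sT: "symm T" unfolding T_def symm_def using Pf(2) by (simp add: transpose_scalar transpose_uminus offdiag_transpose symm_def)
  define D where "D = diagm (\<lambda>i. P$i$i)"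
  have PD: "P - offdiag P = D" unfolding D_def by (auto simp: offdiag_def diagm_def vec_eq_iff)
  have Pii: "0 < P$i$i" for i
  proof -
    have "axis i 1 \<noteq> (0::real^'n)" by (simp add: axis_eq_0_iff)
    hence "0 < axis i 1 \<bullet> (P *v axis i 1)" using Pf(1) by (simp add: pd_def)
    thus ?thesis by (simp add: inner_axis' mv_axis)
  qed
  have pdD: "pd D" unfolding D_def by (rule pd_diagm[OF Pii])
  have eqN: "matrix_inv Sh + (1/lam) *\<^sub>R (offdiag T - 0) = D"
    unfolding oT P_def[symmetric] PD[symmetric] using lam(1) by simp
  have psdL: "psd (mat 1 + 0 - offdiag T)"
    unfolding psd_def symm_def
  proof (intro conjI allI)
    show "transpose (mat 1 + 0 - offdiag T) = mat 1 + 0 - offdiag T"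
      using sT by (simp add: transpose_add transpose_diff offdiag_transpose symm_def)
    fix x :: "real^'n"
    have "x \<bullet> ((mat 1 + 0 - offdiag T) *v x) = x \<bullet> x + lam * (x \<bullet> (offdiag P *v x))"
      unfolding oT by (simp add: matrix_vector_mult_add_rdistrib mv_scale inner_add_right)
    moreover have "\<bar>x \<bullet> (offdiag P *v x)\<bar> \<le> c * (x \<bullet> x)" unfolding c_def by (rule quad_bound)
    moreover have "lam * (c * (x \<bullet> x)) \<le> x \<bullet> x"
      using lam(2) mult_right_mono[OF lam(2), of "x \<bullet> x"] by (simp add: mult.assoc)
    moreover have "- (lam * \<bar>x \<bullet> (offdiag P *v x)\<bar>) \<le> lam * (x \<bullet> (offdiag P *v x))"
    proof -
      have "lam * (- \<bar>x \<bullet> (offdiag P *v x)\<bar>) \<le> lam * (x \<bullet> (offdiag P *v x))"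
        by (rule mult_left_mono) (use lam(1) in auto)
      thus ?thesis by simp
    qed
    moreover have "lam * \<bar>x \<bullet> (offdiag P *v x)\<bar> \<le> lam * (c * (x \<bullet> x))"
      using lam(1) calculation(2) by simp
    ultimately show "0 \<le> x \<bullet> ((mat 1 + 0 - offdiag T) *v x)" by linarith
  qed
  have pdN: "pd (matrix_inv Sh + (1/lam) *\<^sub>R (offdiag T - 0))" unfolding eqN by (rule pdD)
  have s0: "symm (0::real^'n^'n)" by (simp add: symm_def transpose_def vec_eq_iff)
  have inC: "(lam, 0, T) \<in> C0 Sh"
    unfolding C0_def using s0 sT lam(1) psdL psd_0 pdN by blast
  have dD: "0 < det D" by (rule pd_det_pos[OF pdD])
  have dS: "0 < det Sh" by (rule pd_det_pos[OF Sh])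
  have "delta_max Sh = ln (det D) + ln (det Sh)"
    unfolding delta_max_def P_def[symmetric] PD using dD dS by (simp add: det_mul ln_mult)
  hence "Jdual Sh \<delta> lam 0 T = lam * (delta_max Sh - \<delta>)"
    unfolding Jdual_def using eqN by simp
  also have "\<dots> > 0" using lam(1) dmax by simp
  finally show ?thesis using inC by blast
qed

lemma mat_eq_cols:
  fixes A B :: "real^'n^'m"
  assumes "\<And>j. A *v axis j 1 = B *v axis j 1"
  shows "A = B"
proof -
  have "A$i$j = B$i$j" for i j using assms[of j] mv_axis[of A j i] mv_axis[of B j i] by simp
  thus ?thesis by (simp add: vec_eq_iff)
qed

theorem mainTheorem10:
  fixes Sh :: "real^'n^'n" and \<delta> :: real
  assumes "pd Sh" and "0 < \<delta>" and "\<delta> < delta_max Sh"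
  shows "primal_value Sh \<delta> = dual_value Sh \<delta>
    \<and> (\<forall>lam G T R S.
          (lam, G, T) \<in> C0 Sh \<and> Jdual Sh \<delta> lam G T = dual_value Sh \<delta>
          \<and> (R, S) \<in> primal_feasible Sh \<delta> \<and> trace R = primal_value Sh \<delta>
        \<longrightarrow> (let L = mat 1 + G - offdiag T in
              S = lam *\<^sub>R matrix_inv (lam *\<^sub>R matrix_inv Sh - G + offdiag T)
            \<and> trace (L ** R) = 0
            \<and> trace (G ** (S - R)) = 0
            \<and> trace (T ** offdiag (S - R)) = 0
            \<and> ({x. L *v x = 0} = {0} \<longrightarrow> R = 0 \<and> offdiag S = 0)
            \<and> (\<forall>U :: real^'r^'n.
                 transpose U ** U = mat 1 \<and> range (\<lambda>y. U *v y) = {x. L *v x = 0}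
                 \<longrightarrow> (\<exists>Q :: real^'r^'r. symm Q \<and> R = U ** Q ** transpose U
                        \<and> offdiag (U ** Q ** transpose U) = offdiag S))))"
proof -
  note Sh = assms(1) and dpos = assms(2) and dmax = assms(3)
  define PF where "PF = primal_feasible Sh \<delta>"
  define p where "p = primal_value Sh \<delta>"
  have feas0: "(Sh, Sh) \<in> PF"
  proof -
    have "KL Sh Sh = 0" using Sh_facts[OF Sh] by (simp add: KL_def trace_I)
    moreover have "psd (Sh - Sh)" using psd_0 by simp
    moreover have "offdiag (Sh - Sh) = 0" by (simp add: offdiag_0)
    ultimately show ?thesis unfolding PF_def primal_feasible_def using Sh pd_psd[OF Sh] dpos
      by (auto simp: pd_def)
  qed
  have ne: "(\<lambda>(R, S). trace R) ` PF \<noteq> {}" using feas0 by blast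
  have bdd: "bdd_below ((\<lambda>(R, S). trace R) ` PF)"
    by (rule bdd_belowI[of _ 0]) (auto simp: PF_def primal_feasible_def intro: psd_trace_nonneg)
  have lower: "p \<le> trace R" if "(R, S) \<in> PF" for R S
  proof -
    have "trace R \<in> (\<lambda>(R, S). trace R) ` PF" using that by force
    thus ?thesis unfolding p_def primal_value_def PF_def[symmetric] by (rule cInf_lower[OF _ bdd])
  qed
  have wd: "Jdual Sh \<delta> lam G T \<le> p" if "(lam, G, T) \<in> C0 Sh" for lam G T
  proof -
    have "Jdual Sh \<delta> lam G T \<le> x" if "x \<in> (\<lambda>(R, S). trace R) ` PF" for x
      using that weak_dual(1)[OF Sh \<open>(lam, G, T) \<in> C0 Sh\<close>] unfolding PF_def by auto
    thus ?thesis unfolding p_def primal_value_def PF_def[symmetric] by (rule cInf_greatest[OF ne])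
  qed
  obtain lam0 G0 T0 where e0: "(lam0, G0, T0) \<in> C0 Sh" "0 < Jdual Sh \<delta> lam0 G0 T0"
    using explicit_dual[OF Sh dmax] by blast
  have ppos: "0 < p" using wd[OF e0(1)] e0(2) by linarith
  obtain lam1 G1 T1 where e1: "(lam1, G1, T1) \<in> C0 Sh" "p \<le> Jdual Sh \<delta> lam1 G1 T1"
  proof -
    have lower': "\<And>R S. (R, S) \<in> primal_feasible Sh \<delta> \<Longrightarrow> p \<le> trace R" using lower unfolding PF_def .
    have "\<exists>lam G T. (lam, G, T) \<in> C0 Sh \<and> p \<le> Jdual Sh \<delta> lam G T"
      by (rule dual_attain[OF Sh dpos]) (auto intro: lower' ppos)
    thus ?thesis using that by blast
  qed
  define DS where "DS = (\<lambda>(lam, G, T). Jdual Sh \<delta> lam G T) ` C0 Sh"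
  have dne: "DS \<noteq> {}" unfolding DS_def using e0(1) by blast
  have dbdd: "bdd_above DS" unfolding DS_def
    by (rule bdd_aboveI[of _ p]) (auto intro: wd)
  have dv: "dual_value Sh \<delta> = p"
  proof (rule antisym)
    show "dual_value Sh \<delta> \<le> p" unfolding dual_value_def DS_def[symmetric]
      by (rule cSup_least[OF dne]) (auto simp: DS_def intro: wd)
    have "Jdual Sh \<delta> lam1 G1 T1 \<in> DS" unfolding DS_def using e1(1) by force
    hence "Jdual Sh \<delta> lam1 G1 T1 \<le> Sup DS" by (rule cSup_upper[OF _ dbdd])
    thus "p \<le> dual_value Sh \<delta>" unfolding dual_value_def DS_def[symmetric] using e1(2) by linarith
  qed
  show ?thesis
  proof (intro conjI allI impI)
    show "primal_value Sh \<delta> = dual_value Sh \<delta>" using dv p_def by simp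
  next
    fix lam G T R S
    assume h: "(lam, G, T) \<in> C0 Sh \<and> Jdual Sh \<delta> lam G T = dual_value Sh \<delta>
          \<and> (R, S) \<in> primal_feasible Sh \<delta> \<and> trace R = primal_value Sh \<delta>"
    hence C: "(lam, G, T) \<in> C0 Sh" and F: "(R, S) \<in> primal_feasible Sh \<delta>"
      and eqJ: "Jdual Sh \<delta> lam G T = trace R" using dv p_def by auto
    define L where "L = mat 1 + G - offdiag T"
    have W: "trace (L ** R) = 0" "trace (G ** (S - R)) = 0"
        "S = lam *\<^sub>R matrix_inv (lam *\<^sub>R matrix_inv Sh - G + offdiag T)"
      using weak_dual(2)[OF Sh C F eqJ] unfolding L_def by auto
    have psdL: "psd L" using C unfolding C0_def L_def by auto
    have Fs: "symm R" "psd R" "offdiag (S - R) = 0" using F unfolding primal_feasible_def by auto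
    have LR: "L ** R = 0" by (rule trace_psd(2)[OF psdL Fs(2) W(1)])
    have colker: "L *v (R *v axis j 1) = 0" for j using LR by (simp add: matrix_vector_mul_assoc)
    have oS: "offdiag S = offdiag R" using Fs(3) by (simp add: offdiag_diff)
    have sR: "transpose R = R" using Fs(1) by (simp add: symm_def)
    have part5: "{x. L *v x = 0} = {0} \<longrightarrow> R = 0 \<and> offdiag S = 0"
    proof
      assume k: "{x. L *v x = 0} = {0}"
      have "R *v axis j 1 = 0 *v axis j 1" for j using colker[of j] k by auto
      hence "R = 0" by (rule mat_eq_cols)
      thus "R = 0 \<and> offdiag S = 0" using oS by (simp add: offdiag_0)
    qed
    have part6: "\<forall>U :: real^'r^'n.
                 transpose U ** U = mat 1 \<and> range (\<lambda>y. U *v y) = {x. L *v x = 0}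
                 \<longrightarrow> (\<exists>Q :: real^'r^'r. symm Q \<and> R = U ** Q ** transpose U
                        \<and> offdiag (U ** Q ** transpose U) = offdiag S)"
    proof (intro allI impI)
      fix U :: "real^'r^'n"
      assume U: "transpose U ** U = mat 1 \<and> range (\<lambda>y. U *v y) = {x. L *v x = 0}"
      define Q where "Q = transpose U ** R ** U"
      have sQ: "symm Q" unfolding Q_def symm_def
        by (simp only: matrix_transpose_mul transpose_transpose sR matrix_mul_assoc)
      have UUR: "U ** transpose U ** R = R"
      proof (rule mat_eq_cols)
        fix j
        have "R *v axis j 1 \<in> range (\<lambda>y. U *v y)" using U colker[of j] by auto
        then obtain y where y: "R *v axis j 1 = U *v y" by blast
        have "(U ** transpose U ** R) *v axis j 1 = U *v ((transpose U ** U) *v y)"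
          by (simp only: matrix_vector_mul_assoc[symmetric] y)
        also have "\<dots> = R *v axis j 1" using U y by simp
        finally show "(U ** transpose U ** R) *v axis j 1 = R *v axis j 1" .
      qed
      have RUU: "R ** U ** transpose U = R"
      proof -
        have "transpose (U ** transpose U ** R) = R ** U ** transpose U"
          by (simp only: matrix_transpose_mul transpose_transpose sR matrix_mul_assoc)
        thus ?thesis using UUR sR by simp
      qed
      have RQ: "R = U ** Q ** transpose U"
      proof -
        have "U ** Q ** transpose U = (U ** transpose U ** R) ** U ** transpose U"
          unfolding Q_def by (simp only: matrix_mul_assoc)
        also have "\<dots> = R" by (simp only: UUR RUU)
        finally show ?thesis by simp
      qed
      show "\<exists>Q :: real^'r^'r. symm Q \<and> R = U ** Q ** transpose U
                        \<and> offdiag (U ** Q ** transpose U) = offdiag S"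
        using sQ RQ oS by metis
    qed
    have part4: "trace (T ** offdiag (S - R)) = 0" using Fs(3) by (simp add: trace_def)
    show "let L = mat 1 + G - offdiag T in
              S = lam *\<^sub>R matrix_inv (lam *\<^sub>R matrix_inv Sh - G + offdiag T)
            \<and> trace (L ** R) = 0
            \<and> trace (G ** (S - R)) = 0
            \<and> trace (T ** offdiag (S - R)) = 0
            \<and> ({x. L *v x = 0} = {0} \<longrightarrow> R = 0 \<and> offdiag S = 0)
            \<and> (\<forall>U :: real^'r^'n.
                 transpose U ** U = mat 1 \<and> range (\<lambda>y. U *v y) = {x. L *v x = 0}
                 \<longrightarrow> (\<exists>Q :: real^'r^'r. symm Q \<and> R = U ** Q ** transpose U
                        \<and> offdiag (U ** Q ** transpose U) = offdiag S))"
      unfolding Let_def L_def[symmetric] using W part4 part5 part6 by blast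
  qed
qed

end
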